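(* Let $\overrightarrow{W}$ be a Morse sequence on a simplicial complex $K$. (1) If $z\in Z_p(K)$, then $\widetilde{\curlywedge}_p(\curlywedge_p(z))$ is homologous to $z$, i.e. $\widetilde{\curlywedge}_p(\curlywedge_p(z))+z\in B_p(K)$. (2) If $z\in Z^p(K)$, then $\widetilde{\curlyvee}_p(\curlyvee_p(z))$ is cohomologous to $z$, i.e. $\widetilde{\curlyvee}_p(\curlyvee_p(z))+z\in B^p(K)$.
   Context: A simplicial complex $K$ is a finite collection of non-empty finite sets closed under taking non-empty subsets; $\dim\sigma=|\sigma|-1$, $K^{(p)}$ the set of $p$-simplices. A pair $(\sigma,\tau)$ with $\sigma\subsetneq\tau$ is a free pair for $K$ if $\tau$ is the only simplex other than $\sigma$ containing $\sigma$; $K$ is then an elementary expansion of $K\setminus\{\sigma,\tau\}$. If $\nu$ is a facet (maximal simplex) of $K$, $K$ is an elementary filling of $K\setminus\{\nu\}$. A Morse sequence on $K$ is a sequence $\langle\emptyset=K_0,\dots,K_k=K\rangle$ with each $K_i$ an elementary expansion or filling of $K_{i-1}$; simplices added by fillings are critical; for an expansion $K_i=K_{i-1}\cup\{\sigma,\tau\}$, $\sigma\subset\tau$, $\sigma$ is lower regular and $\tau$ upper regular. $\widehat W$ is the set of critical simplices. $K[p]$ is the $\mathbb{Z}_2$-vector space of subsets of $K^{(p)}$ (sum = symmetric difference, $0=\emptyset$), $\widehat W[p]=\{c\in K[p]:c\subseteq\widehat W\}$. For $\sigma\in K^{(p)}$, $\partial(\sigma)=\{\tau\in K^{(p-1)}:\tau\subset\sigma\}$,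 $\delta(\sigma)=\{\tau\in K^{(p+1)}:\sigma\subset\tau\}$, extended linearly to $\partial_p,\delta_p$; $Z_p(K)=\ker\partial_p$, $B_p(K)=\operatorname{im}\partial_{p+1}$, $Z^p(K)=\ker\delta_p$, $B^p(K)=\operatorname{im}\delta_{p-1}$. The reference map $\curlywedge$ is the unique map assigning to each $p$-simplex an element of $\widehat W[p]$, with linear extension $\curlywedge_p:K[p]\to\widehat W[p]$, such that $\curlywedge(\nu)=\{\nu\}$ for critical $\nu$ and $\curlywedge(\tau)=0=\curlywedge(\partial(\tau))$ for upper regular $\tau$; the coreference map $\curlyvee$ (linear extension $\curlyvee_p$) is the unique such map with $\curlyvee(\nu)=\{\nu\}$ for critical $\nu$ and $\curlyvee(\sigma)=0=\curlyvee(\delta(\sigma))$ for lower regular $\sigma$. The extension map $\widetilde\curlywedge_p:\widehat W[p]\to K[p]$ and coextension map $\widetilde\curlyvee_p:\widehat W[p]\to K[p]$ are the linear maps defined on critical $p$-simplices $\kappa$ by $\widetilde\curlywedge(\kappa)=\{\nu\in K:\kappa\in\curlyvee(\nu)\}$ and $\widetilde\curlyvee(\kappa)=\{\nu\in K:\kappa\in\curlywedge(\nu)\}$. *)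

theory Defs
  imports Main
begin

definition simplicial_complex :: "'v set set \<Rightarrow> bool" where
  "simplicial_complex K \<longleftrightarrow> finite K \<and> (\<forall>\<sigma>\<in>K. finite \<sigma> \<and> \<sigma> \<noteq> {}) \<and>
     (\<forall>\<sigma>\<in>K. \<forall>\<tau>. \<tau> \<subseteq> \<sigma> \<and> \<tau> \<noteq> {} \<longrightarrow> \<tau> \<in> K)"

definition simplices :: "'v set set \<Rightarrow> nat \<Rightarrow> 'v set set" where
  "simplices K p = {\<sigma>\<in>K. card \<sigma> = p + 1}"

text \<open>Sum in the Z2-vector space of chains (symmetric difference).\<close>
definition chain_add :: "'a set \<Rightarrow> 'a set \<Rightarrow> 'a set" where
  "chain_add a b = (a - b) \<union> (b - a)"

text \<open>Z2-linear extension of a map f on simplices to a (finite) chain c: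
  the sum of the f \<sigma> for \<sigma> in c, i.e. the elements occurring an odd number of times.\<close>
definition lin :: "('a \<Rightarrow> 'b set) \<Rightarrow> 'a set \<Rightarrow> 'b set" where
  "lin f c = {x. odd (card {\<sigma>\<in>c. x \<in> f \<sigma>})}"

definition bd :: "'v set set \<Rightarrow> 'v set \<Rightarrow> 'v set set" where
  "bd K \<sigma> = {\<tau>\<in>K. \<tau> \<subseteq> \<sigma> \<and> card \<tau> + 1 = card \<sigma>}"

definition cobd :: "'v set set \<Rightarrow> 'v set \<Rightarrow> 'v set set" where
  "cobd K \<sigma> = {\<tau>\<in>K. \<sigma> \<subseteq> \<tau> \<and> card \<tau> = card \<sigma> + 1}"

definition cycles :: "'v set set \<Rightarrow> nat \<Rightarrow> 'v set set set" where
  "cycles K p = {z. z \<subseteq> simplices K p \<and> lin (bd K) z = {}}"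

definition boundaries :: "'v set set \<Rightarrow> nat \<Rightarrow> 'v set set set" where
  "boundaries K p = {lin (bd K) c | c. c \<subseteq> simplices K (p + 1)}"

definition cocycles :: "'v set set \<Rightarrow> nat \<Rightarrow> 'v set set set" where
  "cocycles K p = {z. z \<subseteq> simplices K p \<and> lin (cobd K) z = {}}"

text \<open>B^p = image of the coboundary on (p-1)-chains; the (p-1)-simplices are the
  simplices with p vertices (for p = 0 there are none, so B^0 = {0}).\<close>
definition coboundaries :: "'v set set \<Rightarrow> nat \<Rightarrow> 'v set set set" where
  "coboundaries K p = {lin (cobd K) c | c. c \<subseteq> {\<sigma>\<in>K. card \<sigma> = p}}"

definition free_pair :: "'v set set \<Rightarrow> 'v set \<Rightarrow> 'v set \<Rightarrow> bool" where
  "free_pair K \<sigma> \<tau> \<longleftrightarrow> \<sigma> \<in> K \<and> \<tau> \<in> K \<and> \<sigma> \<subset> \<tau> \<and>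
     (\<forall>\<nu>\<in>K. \<sigma> \<subseteq> \<nu> \<longrightarrow> \<nu> = \<sigma> \<or> \<nu> = \<tau>)"

definition elem_expansion :: "'v set set \<Rightarrow> 'v set set \<Rightarrow> bool" where
  "elem_expansion K' K \<longleftrightarrow> (\<exists>\<sigma> \<tau>. free_pair K' \<sigma> \<tau> \<and> K = K' - {\<sigma>, \<tau>})"

definition facet :: "'v set set \<Rightarrow> 'v set \<Rightarrow> bool" where
  "facet K \<nu> \<longleftrightarrow> \<nu> \<in> K \<and> (\<forall>\<mu>\<in>K. \<nu> \<subseteq> \<mu> \<longrightarrow> \<mu> = \<nu>)"

definition elem_filling :: "'v set set \<Rightarrow> 'v set set \<Rightarrow> bool" where
  "elem_filling K' K \<longleftrightarrow> (\<exists>\<nu>. facet K' \<nu> \<and> K = K' - {\<nu>})"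

definition morse_seq :: "'v set set list \<Rightarrow> 'v set set \<Rightarrow> bool" where
  "morse_seq W K \<longleftrightarrow> W \<noteq> [] \<and> W ! 0 = {} \<and> last W = K \<and>
     (\<forall>i. Suc i < length W \<longrightarrow> elem_expansion (W ! Suc i) (W ! i) \<or> elem_filling (W ! Suc i) (W ! i))"

definition critical :: "'v set set list \<Rightarrow> 'v set set" where
  "critical W = {\<nu>. \<exists>i. Suc i < length W \<and> elem_filling (W ! Suc i) (W ! i) \<and> W ! Suc i - W ! i = {\<nu>}}"

definition lower_regular :: "'v set set list \<Rightarrow> 'v set set" where
  "lower_regular W = {\<sigma>. \<exists>i \<tau>. Suc i < length W \<and> \<sigma> \<subset> \<tau> \<and> W ! Suc i - W ! i = {\<sigma>, \<tau>}}"

definition upper_regular :: "'v set set list \<Rightarrow> 'v set set" where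
  "upper_regular W = {\<tau>. \<exists>i \<sigma>. Suc i < length W \<and> \<sigma> \<subset> \<tau> \<and> W ! Suc i - W ! i = {\<sigma>, \<tau>}}"

text \<open>Maps are on the simplices of K (value {} outside K, for uniqueness);
  a p-simplex is mapped to an element of \<^emph>\<open>W-hat\<close>[p].\<close>
definition is_ref_map :: "'v set set list \<Rightarrow> 'v set set \<Rightarrow> ('v set \<Rightarrow> 'v set set) \<Rightarrow> bool" where
  "is_ref_map W K f \<longleftrightarrow>
     (\<forall>\<sigma>. \<sigma> \<notin> K \<longrightarrow> f \<sigma> = {}) \<and>
     (\<forall>\<sigma>\<in>K. f \<sigma> \<subseteq> critical W \<inter> {\<nu>\<in>K. card \<nu> = card \<sigma>}) \<and>
     (\<forall>\<nu>\<in>critical W. f \<nu> = {\<nu>}) \<and>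
     (\<forall>\<tau>\<in>upper_regular W. f \<tau> = {} \<and> lin f (bd K \<tau>) = {})"

definition ref_map :: "'v set set list \<Rightarrow> 'v set set \<Rightarrow> 'v set \<Rightarrow> 'v set set" where
  "ref_map W K = (THE f. is_ref_map W K f)"

definition is_coref_map :: "'v set set list \<Rightarrow> 'v set set \<Rightarrow> ('v set \<Rightarrow> 'v set set) \<Rightarrow> bool" where
  "is_coref_map W K f \<longleftrightarrow>
     (\<forall>\<sigma>. \<sigma> \<notin> K \<longrightarrow> f \<sigma> = {}) \<and>
     (\<forall>\<sigma>\<in>K. f \<sigma> \<subseteq> critical W \<inter> {\<nu>\<in>K. card \<nu> = card \<sigma>}) \<and>
     (\<forall>\<nu>\<in>critical W. f \<nu> = {\<nu>}) \<and>
     (\<forall>\<sigma>\<in>lower_regular W. f \<sigma> = {} \<and> lin f (cobd K \<sigma>) = {})"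

definition coref_map :: "'v set set list \<Rightarrow> 'v set set \<Rightarrow> 'v set \<Rightarrow> 'v set set" where
  "coref_map W K = (THE f. is_coref_map W K f)"

definition ext_map :: "'v set set list \<Rightarrow> 'v set set \<Rightarrow> 'v set \<Rightarrow> 'v set set" where
  "ext_map W K \<kappa> = {\<nu>\<in>K. \<kappa> \<in> coref_map W K \<nu>}"

definition coext_map :: "'v set set list \<Rightarrow> 'v set set \<Rightarrow> 'v set \<Rightarrow> 'v set set" where
  "coext_map W K \<kappa> = {\<nu>\<in>K. \<kappa> \<in> ref_map W K \<nu>}"

end

theory Submission
  imports Defs "HOL-Library.Z2"
begin

declare add_bit_eq_xor[simp del] mult_bit_eq_and[simp del]

abbreviation bi :: "bool \<Rightarrow> bit" where "bi b \<equiv> of_bool b"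

lemma of_nat_bit: "(of_nat n :: bit) = of_bool (odd n)"
  by (induction n) auto

lemma card_bit: "finite A \<Longrightarrow> bi (odd (card {x\<in>A. P x})) = (\<Sum>x\<in>A. bi (P x))"
proof -
  assume "finite A"
  then have "(\<Sum>x\<in>A. bi (P x)) = of_nat (card (A \<inter> {x. P x}))"
    by (simp add: sum_of_bool_eq)
  also have "A \<inter> {x. P x} = {x\<in>A. P x}" by auto
  finally show ?thesis by (simp add: of_nat_bit)
qed

lemma lin_ind: "finite c \<Longrightarrow> bi (a \<in> lin f c) = (\<Sum>\<sigma>\<in>c. bi (a \<in> f \<sigma>))"
  unfolding lin_def using card_bit[of c "\<lambda>\<sigma>. a \<in> f \<sigma>"] by simp

lemma lin_ind_U: "finite U \<Longrightarrow> c \<subseteq> U \<Longrightarrow>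
   bi (a \<in> lin f c) = (\<Sum>\<sigma>\<in>U. bi (\<sigma> \<in> c) * bi (a \<in> f \<sigma>))"
proof -
  assume "finite U" "c \<subseteq> U"
  then have fc: "finite c" by (rule rev_finite_subset)
  have "(\<Sum>\<sigma>\<in>U. bi (\<sigma> \<in> c) * bi (a \<in> f \<sigma>)) = (\<Sum>\<sigma>\<in>U. if \<sigma> \<in> c then bi (a \<in> f \<sigma>) else 0)"
    by (rule sum.cong) auto
  also have "\<dots> = (\<Sum>\<sigma>\<in>U \<inter> c. bi (a \<in> f \<sigma>))"
    by (rule sym, rule sum.inter_restrict, fact)
  also have "U \<inter> c = c" using \<open>c \<subseteq> U\<close> by auto
  finally have eq: "(\<Sum>\<sigma>\<in>U. bi (\<sigma> \<in> c) * bi (a \<in> f \<sigma>)) = (\<Sum>\<sigma>\<in>c. bi (a \<in> f \<sigma>))" .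
  show ?thesis by (simp only: lin_ind[OF fc] eq)
qed

lemma set_eqI_bit: "(\<And>a. bi (a \<in> x) = bi (a \<in> y)) \<Longrightarrow> x = y"
  by (rule set_eqI) (metis of_bool_eq_iff)

lemma ca_ind: "bi (a \<in> chain_add x y) = bi (a \<in> x) + bi (a \<in> y)"
  by (auto simp: chain_add_def)

lemma ca_comm: "chain_add x y = chain_add y x" by (auto simp: chain_add_def)
lemma ca_assoc: "chain_add (chain_add x y) z = chain_add x (chain_add y z)" by (auto simp: chain_add_def)
lemma ca_self: "chain_add x x = {}" by (auto simp: chain_add_def)
lemma ca_empty[simp]: "chain_add x {} = x" "chain_add {} x = x" by (auto simp: chain_add_def)
lemma ca_eq_empty: "chain_add x y = {} \<Longrightarrow> x = y" by (auto simp: chain_add_def)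
lemma ca_sub: "chain_add x y \<subseteq> x \<union> y" by (auto simp: chain_add_def)

lemma lin_sub: "lin f c \<subseteq> \<Union>(f ` c)"
proof
  fix a assume "a \<in> lin f c"
  then have "odd (card {\<sigma>\<in>c. a \<in> f \<sigma>})" by (simp add: lin_def)
  then have "card {\<sigma>\<in>c. a \<in> f \<sigma>} \<noteq> 0" by (metis odd_pos neq0_conv)
  then have "{\<sigma>\<in>c. a \<in> f \<sigma>} \<noteq> {}" by (metis card.empty)
  then show "a \<in> \<Union>(f ` c)" by auto
qed

lemma lin_empty[simp]: "lin f {} = {}" by (simp add: lin_def)
lemma lin_single[simp]: "lin f {\<sigma>} = f \<sigma>"
proof (rule set_eqI_bit)
  fix a show "bi (a \<in> lin f {\<sigma>}) = bi (a \<in> f \<sigma>)" by (simp add: lin_ind)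
qed
lemma lin_zero: "(\<And>\<sigma>. \<sigma> \<in> c \<Longrightarrow> f \<sigma> = {}) \<Longrightarrow> lin f c = {}"
proof -
  assume "\<And>\<sigma>. \<sigma> \<in> c \<Longrightarrow> f \<sigma> = {}"
  then have e: "\<And>a. {\<sigma>\<in>c. a \<in> f \<sigma>} = {}" by auto
  show ?thesis by (rule set_eqI) (simp only: lin_def mem_Collect_eq e card.empty empty_iff even_zero not_True_eq_False)
qed
lemma lin_cong: "(\<And>\<sigma>. \<sigma> \<in> c \<Longrightarrow> f \<sigma> = g \<sigma>) \<Longrightarrow> lin f c = lin g c"
proof -
  assume "\<And>\<sigma>. \<sigma> \<in> c \<Longrightarrow> f \<sigma> = g \<sigma>"
  then have "\<And>a. {\<sigma>\<in>c. a \<in> f \<sigma>} = {\<sigma>\<in>c. a \<in> g \<sigma>}" by auto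
  then show ?thesis by (simp add: lin_def)
qed

lemma lin_add: "finite c \<Longrightarrow> finite c' \<Longrightarrow> lin f (chain_add c c') = chain_add (lin f c) (lin f c')"
proof (rule set_eqI_bit)
  fix a assume fin: "finite c" "finite c'"
  let ?U = "c \<union> c'"
  have fU: "finite ?U" using fin by simp
  have "bi (a \<in> lin f (chain_add c c')) = (\<Sum>\<sigma>\<in>?U. bi (\<sigma> \<in> chain_add c c') * bi (a \<in> f \<sigma>))"
    by (rule lin_ind_U[OF fU ca_sub])
  also have "\<dots> = (\<Sum>\<sigma>\<in>?U. bi (\<sigma> \<in> c) * bi (a \<in> f \<sigma>)) + (\<Sum>\<sigma>\<in>?U. bi (\<sigma> \<in> c') * bi (a \<in> f \<sigma>))"
    by (simp add: ca_ind distrib_right sum.distrib)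
  also have "\<dots> = bi (a \<in> lin f c) + bi (a \<in> lin f c')"
    by (simp only: lin_ind_U[OF fU Un_upper1] lin_ind_U[OF fU Un_upper2])
  finally have eq: "bi (a \<in> lin f (chain_add c c')) = bi (a \<in> lin f c) + bi (a \<in> lin f c')" .
  show "bi (a \<in> lin f (chain_add c c')) = bi (a \<in> chain_add (lin f c) (lin f c'))"
    by (simp only: eq ca_ind)
qed

lemma lin_add_fun: "finite c \<Longrightarrow> lin (\<lambda>a. chain_add (g a) (h a)) c = chain_add (lin g c) (lin h c)"
proof (rule set_eqI_bit)
  fix b assume "finite c"
  then show "bi (b \<in> lin (\<lambda>a. chain_add (g a) (h a)) c) = bi (b \<in> chain_add (lin g c) (lin h c))"
    by (simp add: lin_ind ca_ind sum.distrib)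
qed

lemma lin_inter: "lin (\<lambda>a. S \<inter> g a) c = S \<inter> lin g c"
proof (rule set_eqI)
  fix x show "x \<in> lin (\<lambda>a. S \<inter> g a) c \<longleftrightarrow> x \<in> S \<inter> lin g c"
  proof (cases "x \<in> S")
    case True
    then have "{\<sigma>\<in>c. x \<in> S \<inter> g \<sigma>} = {\<sigma>\<in>c. x \<in> g \<sigma>}" by auto
    then show ?thesis using True by (simp add: lin_def)
  next
    case False
    then have "{\<sigma>\<in>c. x \<in> S \<inter> g \<sigma>} = {}" by auto
    then show ?thesis using False by (simp add: lin_def)
  qed
qed

lemma lin_id: "lin (\<lambda>a. {a}) c = c"
proof -
  have "\<And>b. {\<sigma>\<in>c. b \<in> {\<sigma>}} = (if b \<in> c then {b} else {})" by auto
  then show ?thesis by (auto simp: lin_def)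
qed

lemma lin_diag: "lin (\<lambda>\<sigma>. if \<sigma> \<in> S then {\<sigma>} else {}) c = S \<inter> c"
proof -
  have "\<And>b. {\<sigma>\<in>c. b \<in> (if \<sigma> \<in> S then {\<sigma>} else {})} = (if b \<in> c \<and> b \<in> S then {b} else {})" by auto
  then show ?thesis by (auto simp: lin_def)
qed

lemma lin_comp: assumes "finite U" "d \<subseteq> U" "\<And>\<tau>. \<tau> \<in> d \<Longrightarrow> g \<tau> \<subseteq> U"
  shows "lin f (lin g d) = lin (\<lambda>\<tau>. lin f (g \<tau>)) d"
proof (rule set_eqI_bit)
  fix a
  have sub: "lin g d \<subseteq> U" using lin_sub[of g d] assms(3) by blast
  have "bi (a \<in> lin f (lin g d)) = (\<Sum>\<rho>\<in>U. bi (\<rho> \<in> lin g d) * bi (a \<in> f \<rho>))"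
    by (rule lin_ind_U[OF assms(1) sub])
  also have "\<dots> = (\<Sum>\<rho>\<in>U. (\<Sum>\<tau>\<in>U. bi (\<tau> \<in> d) * bi (\<rho> \<in> g \<tau>)) * bi (a \<in> f \<rho>))"
    using lin_ind_U[OF assms(1,2), of _ g] by simp
  also have "\<dots> = (\<Sum>\<rho>\<in>U. \<Sum>\<tau>\<in>U. bi (\<tau> \<in> d) * (bi (\<rho> \<in> g \<tau>) * bi (a \<in> f \<rho>)))"
    by (simp add: sum_distrib_right mult.assoc)
  also have "\<dots> = (\<Sum>\<tau>\<in>U. \<Sum>\<rho>\<in>U. bi (\<tau> \<in> d) * (bi (\<rho> \<in> g \<tau>) * bi (a \<in> f \<rho>)))"
    by (rule sum.swap)
  also have "\<dots> = (\<Sum>\<tau>\<in>U. bi (\<tau> \<in> d) * bi (a \<in> lin f (g \<tau>)))"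
  proof (rule sum.cong)
    fix \<tau> assume "\<tau> \<in> U"
    show "(\<Sum>\<rho>\<in>U. bi (\<tau> \<in> d) * (bi (\<rho> \<in> g \<tau>) * bi (a \<in> f \<rho>))) = bi (\<tau> \<in> d) * bi (a \<in> lin f (g \<tau>))"
    proof (cases "\<tau> \<in> d")
      case True
      then show ?thesis using lin_ind_U[OF assms(1) assms(3)[OF True], of a f] by simp
    qed simp
  qed simp
  also have "\<dots> = bi (a \<in> lin (\<lambda>\<tau>. lin f (g \<tau>)) d)"
    by (simp only: lin_ind_U[OF assms(1,2)])
  finally show "bi (a \<in> lin f (lin g d)) = bi (a \<in> lin (\<lambda>\<tau>. lin f (g \<tau>)) d)" .
qed

lemma adj: assumes "finite x" "finite g"
  shows "odd (card (x \<inter> lin (\<lambda>\<mu>. {\<kappa>. R \<mu> \<kappa>}) g)) \<longleftrightarrow> odd (card (g \<inter> lin (\<lambda>\<kappa>. {\<mu>. R \<mu> \<kappa>}) x))"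
proof -
  have e1: "x \<inter> lin (\<lambda>\<mu>. {\<kappa>. R \<mu> \<kappa>}) g = {\<kappa>\<in>x. \<kappa> \<in> lin (\<lambda>\<mu>. {\<kappa>. R \<mu> \<kappa>}) g}" by auto
  have e2: "g \<inter> lin (\<lambda>\<kappa>. {\<mu>. R \<mu> \<kappa>}) x = {\<mu>\<in>g. \<mu> \<in> lin (\<lambda>\<kappa>. {\<mu>. R \<mu> \<kappa>}) x}" by auto
  have "bi (odd (card (x \<inter> lin (\<lambda>\<mu>. {\<kappa>. R \<mu> \<kappa>}) g))) = (\<Sum>\<kappa>\<in>x. bi (\<kappa> \<in> lin (\<lambda>\<mu>. {\<kappa>. R \<mu> \<kappa>}) g))"
    unfolding e1 by (rule card_bit[OF assms(1)])
  also have "\<dots> = (\<Sum>\<kappa>\<in>x. \<Sum>\<mu>\<in>g. bi (R \<mu> \<kappa>))"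
    by (simp only: lin_ind[OF assms(2)] mem_Collect_eq)
  also have "\<dots> = (\<Sum>\<mu>\<in>g. \<Sum>\<kappa>\<in>x. bi (R \<mu> \<kappa>))" by (rule sum.swap)
  also have "\<dots> = (\<Sum>\<mu>\<in>g. bi (\<mu> \<in> lin (\<lambda>\<kappa>. {\<mu>. R \<mu> \<kappa>}) x))"
    by (simp only: lin_ind[OF assms(1)] mem_Collect_eq)
  also have "\<dots> = bi (odd (card (g \<inter> lin (\<lambda>\<kappa>. {\<mu>. R \<mu> \<kappa>}) x)))"
    unfolding e2 by (rule card_bit[OF assms(2), symmetric])
  finally show ?thesis by (simp only: of_bool_eq_iff)
qed

definition is_ref :: "'a set \<Rightarrow> ('a \<Rightarrow> 'a \<Rightarrow> bool) \<Rightarrow> ('a \<Rightarrow> int) \<Rightarrow> 'a set \<Rightarrow> 'a set \<Rightarrow> ('a \<Rightarrow> 'a set) \<Rightarrow> bool" where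
  "is_ref C F dim crit up f \<longleftrightarrow> (\<forall>x. x \<notin> C \<longrightarrow> f x = {}) \<and>
     (\<forall>x\<in>C. f x \<subseteq> {c\<in>crit. dim c = dim x}) \<and> (\<forall>c\<in>crit. f c = {c}) \<and>
     (\<forall>\<tau>\<in>up. f \<tau> = {} \<and> lin f {\<rho>. F \<rho> \<tau>} = {})"

locale ms =
  fixes C :: "'a set" and F :: "'a \<Rightarrow> 'a \<Rightarrow> bool" and dim :: "'a \<Rightarrow> int"
    and crit :: "'a set" and low :: "'a set" and up :: "'a set"
    and P :: "'a \<Rightarrow> 'a \<Rightarrow> bool" and t :: "'a \<Rightarrow> int"
  assumes finC: "finite C"
    and F_C: "\<And>\<rho> \<nu>. F \<rho> \<nu> \<Longrightarrow> \<rho> \<in> C \<and> \<nu> \<in> C"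
    and F_dim: "\<And>\<rho> \<nu>. F \<rho> \<nu> \<Longrightarrow> dim \<nu> = dim \<rho> + 1"
    and partC: "C = crit \<union> low \<union> up"
    and d_cl: "crit \<inter> low = {}" and d_cu: "crit \<inter> up = {}" and d_lu: "low \<inter> up = {}"
    and P_lu: "\<And>\<sigma> \<tau>. P \<sigma> \<tau> \<Longrightarrow> \<sigma> \<in> low \<and> \<tau> \<in> up"
    and low_ex: "\<And>\<sigma>. \<sigma> \<in> low \<Longrightarrow> \<exists>\<tau>. P \<sigma> \<tau>"
    and up_ex: "\<And>\<tau>. \<tau> \<in> up \<Longrightarrow> \<exists>\<sigma>. P \<sigma> \<tau>"
    and P_F: "\<And>\<sigma> \<tau>. P \<sigma> \<tau> \<Longrightarrow> F \<sigma> \<tau>"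
    and P_t: "\<And>\<sigma> \<tau>. P \<sigma> \<tau> \<Longrightarrow> t \<sigma> = t \<tau>"
    and F_t: "\<And>\<rho> \<nu>. F \<rho> \<nu> \<Longrightarrow> t \<rho> \<le> t \<nu>"
    and F_teq: "\<And>\<rho> \<nu>. F \<rho> \<nu> \<Longrightarrow> t \<rho> = t \<nu> \<Longrightarrow> P \<rho> \<nu>"
    and t_eq: "\<And>x y. x \<in> C \<Longrightarrow> y \<in> C \<Longrightarrow> t x = t y \<Longrightarrow> x = y \<or> P x y \<or> P y x"
    and dd: "\<And>\<rho> \<nu>. even (card {\<mu>. F \<rho> \<mu> \<and> F \<mu> \<nu>})"
begin

abbreviation bdy :: "'a set \<Rightarrow> 'a set" where "bdy x \<equiv> lin (\<lambda>\<nu>. {\<rho>. F \<rho> \<nu>}) x"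

lemma bd_sub: "{\<rho>. F \<rho> \<nu>} \<subseteq> C" using F_C by auto
lemma bdy_sub: "bdy x \<subseteq> C" using lin_sub[of "\<lambda>\<nu>. {\<rho>. F \<rho> \<nu>}" x] bd_sub by blast
lemma up_C: "up \<subseteq> C" using partC by auto
lemma low_C: "low \<subseteq> C" using partC by auto
lemma crit_C: "crit \<subseteq> C" using partC by auto

lemma P_uniq1: assumes "P \<sigma> \<tau>" "P \<sigma> \<tau>'" shows "\<tau> = \<tau>'"
proof -
  have eq: "t \<tau> = t \<tau>'" using P_t[OF assms(1)] P_t[OF assms(2)] by simp
  have u: "\<tau> \<in> up" "\<tau>' \<in> up" using P_lu[OF assms(1)] P_lu[OF assms(2)] by auto
  then have c: "\<tau> \<in> C" "\<tau>' \<in> C" using up_C by auto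
  have "\<not> P \<tau> \<tau>'" using P_lu[of \<tau> \<tau>'] u d_lu by auto
  moreover have "\<not> P \<tau>' \<tau>" using P_lu[of \<tau>' \<tau>] u d_lu by auto
  ultimately show ?thesis using t_eq[OF c eq] by simp
qed

lemma P_uniq2: assumes "P \<sigma> \<tau>" "P \<sigma>' \<tau>" shows "\<sigma> = \<sigma>'"
proof -
  have eq: "t \<sigma> = t \<sigma>'" using P_t[OF assms(1)] P_t[OF assms(2)] by simp
  have u: "\<sigma> \<in> low" "\<sigma>' \<in> low" using P_lu[OF assms(1)] P_lu[OF assms(2)] by auto
  then have c: "\<sigma> \<in> C" "\<sigma>' \<in> C" using low_C by auto
  have "\<not> P \<sigma> \<sigma>'" using P_lu[of \<sigma> \<sigma>'] u d_lu by auto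
  moreover have "\<not> P \<sigma>' \<sigma>" using P_lu[of \<sigma>' \<sigma>] u d_lu by auto
  ultimately show ?thesis using t_eq[OF c eq] by simp
qed

lemma U_lemma: assumes "e \<subseteq> up" "bdy e \<inter> low = {}" shows "e = {}"
proof (rule ccontr)
  assume ne: "e \<noteq> {}"
  have fe: "finite e" using finite_subset[OF subset_trans[OF assms(1) up_C] finC] .
  define m where "m = Max (t ` e)"
  have "m \<in> t ` e" unfolding m_def using fe ne by simp
  then obtain \<tau> where \<tau>: "\<tau> \<in> e" "t \<tau> = m" by auto
  have mx: "\<And>\<tau>'. \<tau>' \<in> e \<Longrightarrow> t \<tau>' \<le> t \<tau>" unfolding \<tau>(2) m_def
    using Max_ge[OF finite_imageI[OF fe] imageI] by blast
  obtain \<sigma> where P: "P \<sigma> \<tau>" using up_ex[OF subsetD[OF assms(1) \<tau>(1)]] by blast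
  have "{\<tau>'\<in>e. \<sigma> \<in> {\<rho>. F \<rho> \<tau>'}} = {\<tau>}"
  proof
    show "{\<tau>} \<subseteq> {\<tau>'\<in>e. \<sigma> \<in> {\<rho>. F \<rho> \<tau>'}}" using \<tau>(1) P_F[OF P] by auto
    show "{\<tau>'\<in>e. \<sigma> \<in> {\<rho>. F \<rho> \<tau>'}} \<subseteq> {\<tau>}"
    proof
      fix \<tau>' assume "\<tau>' \<in> {\<tau>'\<in>e. \<sigma> \<in> {\<rho>. F \<rho> \<tau>'}}"
      then have h: "\<tau>' \<in> e" "F \<sigma> \<tau>'" by auto
      have "t \<sigma> \<le> t \<tau>'" using F_t[OF h(2)] .
      moreover have "t \<tau>' \<le> t \<tau>" using mx[OF h(1)] .
      moreover have "t \<sigma> = t \<tau>" using P_t[OF P] .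
      ultimately have "t \<sigma> = t \<tau>'" by simp
      then have "P \<sigma> \<tau>'" using F_teq[OF h(2)] by simp
      then show "\<tau>' \<in> {\<tau>}" using P_uniq1[OF P] by simp
    qed
  qed
  then have "\<sigma> \<in> bdy e" unfolding lin_def by simp
  moreover have "\<sigma> \<in> low" using P_lu[OF P] by simp
  ultimately show False using assms(2) by blast
qed

lemma t_lowbound: "\<exists>L n. \<forall>a\<in>C. L \<le> t a \<and> t a < L + int n"
proof -
  define S where "S = (\<Sum>a\<in>C. \<bar>t a\<bar>)"
  have b: "\<And>a. a \<in> C \<Longrightarrow> \<bar>t a\<bar> \<le> S" unfolding S_def
    by (rule member_le_sum) (auto simp: finC)
  have "\<forall>a\<in>C. - S \<le> t a \<and> t a < - S + int (nat (2 * S + 1))"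
  proof
    fix a assume "a \<in> C"
    then have "\<bar>t a\<bar> \<le> S" by (rule b)
    then show "- S \<le> t a \<and> t a < - S + int (nat (2 * S + 1))" by linarith
  qed
  then show ?thesis by (intro exI)
qed

lemma reduce: assumes "x \<subseteq> C" "\<forall>a\<in>x. dim a = q"
  shows "\<exists>d. d \<subseteq> up \<and> (\<forall>\<tau>\<in>d. dim \<tau> = q + 1) \<and> chain_add x (bdy d) \<inter> low = {}"
proof -
  obtain L n0 where L: "\<forall>a\<in>C. L \<le> t a \<and> t a < L + int n0" using t_lowbound by blast
  have main: "\<forall>x. x \<subseteq> C \<longrightarrow> (\<forall>a\<in>x. dim a = q) \<longrightarrow> (\<forall>\<sigma>\<in>x \<inter> low. t \<sigma> < L + int n) \<longrightarrow>
     (\<exists>d. d \<subseteq> up \<and> (\<forall>\<tau>\<in>d. dim \<tau> = q + 1) \<and> chain_add x (bdy d) \<inter> low = {})" for n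
  proof (induction n)
    case 0
    show ?case
    proof (intro allI impI)
      fix x assume x: "x \<subseteq> C" "\<forall>a\<in>x. dim a = q" "\<forall>\<sigma>\<in>x \<inter> low. t \<sigma> < L + int 0"
      have "x \<inter> low = {}"
      proof (rule ccontr)
        assume "x \<inter> low \<noteq> {}"
        then obtain s where s: "s \<in> x \<inter> low" by blast
        then have "t s < L" using x(3) by simp
        moreover have "L \<le> t s" using L s x(1) by blast
        ultimately show False by simp
      qed
      then show "\<exists>d. d \<subseteq> up \<and> (\<forall>\<tau>\<in>d. dim \<tau> = q + 1) \<and> chain_add x (bdy d) \<inter> low = {}"
        by (intro exI[of _ "{}"]) simp
    qed
  next
    case (Suc n)
    show ?case
    proof (intro allI impI)
      fix x assume x: "x \<subseteq> C" "\<forall>a\<in>x. dim a = q" "\<forall>\<sigma>\<in>x \<inter> low. t \<sigma> < L + int (Suc n)"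
      show "\<exists>d. d \<subseteq> up \<and> (\<forall>\<tau>\<in>d. dim \<tau> = q + 1) \<and> chain_add x (bdy d) \<inter> low = {}"
      proof (cases "\<exists>\<sigma>\<in>x \<inter> low. t \<sigma> = L + int n")
        case False
        have "\<forall>\<sigma>\<in>x \<inter> low. t \<sigma> < L + int n"
        proof
          fix \<sigma> assume s: "\<sigma> \<in> x \<inter> low"
          then have "t \<sigma> < L + int (Suc n)" "t \<sigma> \<noteq> L + int n" using x(3) False by auto
          then show "t \<sigma> < L + int n" by simp
        qed
        then show ?thesis by (rule mp[OF mp[OF mp[OF spec[OF Suc.IH, of x] x(1)] x(2)]])
      next
        case True
        then obtain \<sigma> where \<sigma>: "\<sigma> \<in> x" "\<sigma> \<in> low" "t \<sigma> = L + int n" by blast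
        obtain \<tau> where P: "P \<sigma> \<tau>" using low_ex \<sigma>(2) by blast
        have \<tau>up: "\<tau> \<in> up" using P_lu[OF P] by simp
        define x1 where "x1 = chain_add x {\<rho>. F \<rho> \<tau>}"
        have x1C: "x1 \<subseteq> C" unfolding x1_def using ca_sub[of x "{\<rho>. F \<rho> \<tau>}"] x(1) bd_sub[of \<tau>] by blast
        have dimt: "dim \<tau> = q + 1" using F_dim[OF P_F[OF P]] x(2) \<sigma>(1) by simp
        have x1dim: "\<forall>a\<in>x1. dim a = q"
        proof
          fix a assume "a \<in> x1"
          then have "a \<in> x \<or> F a \<tau>" unfolding x1_def using ca_sub[of x "{\<rho>. F \<rho> \<tau>}"] by blast
          then show "dim a = q" using x(2) F_dim[of a \<tau>] dimt by auto
        qed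
        have x1t: "\<forall>a\<in>x1 \<inter> low. t a < L + int n"
        proof
          fix a assume a: "a \<in> x1 \<inter> low"
          have aC: "a \<in> C" using a low_C by auto
          have ne: "a \<noteq> \<sigma>"
            using a P_F[OF P] \<sigma>(1) unfolding x1_def chain_add_def by auto
          have le: "t a \<le> L + int n"
          proof (cases "a \<in> x")
            case True then have "t a < L + int (Suc n)" using x(3) a by blast
            then show ?thesis by simp
          next
            case False
            then have "F a \<tau>" using a unfolding x1_def chain_add_def by auto
            then show ?thesis using F_t[of a \<tau>] P_t[OF P] \<sigma>(3) by simp
          qed
          have "t a \<noteq> t \<sigma>"
          proof
            assume "t a = t \<sigma>"
            moreover have "\<sigma> \<in> C" using \<sigma>(1) x(1) by blast
            ultimately have "a = \<sigma> \<or> P a \<sigma> \<or> P \<sigma> a" using t_eq[OF aC] by blast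
            moreover have "\<not> P a \<sigma>" using P_lu[of a \<sigma>] \<sigma>(2) d_lu by auto
            moreover have "\<not> P \<sigma> a" using P_lu[of \<sigma> a] a d_lu by auto
            ultimately show False using ne by simp
          qed
          then show "t a < L + int n" using le \<sigma>(3) by simp
        qed
        obtain d1 where d1: "d1 \<subseteq> up" "\<forall>\<tau>\<in>d1. dim \<tau> = q + 1" "chain_add x1 (bdy d1) \<inter> low = {}"
          using mp[OF mp[OF mp[OF spec[OF Suc.IH, of x1] x1C] x1dim] x1t] by blast
        have fd1: "finite d1" using finite_subset[OF subset_trans[OF d1(1) up_C] finC] .
        define d where "d = chain_add d1 {\<tau>}"
        have "bdy d = chain_add (bdy d1) {\<rho>. F \<rho> \<tau>}"
          unfolding d_def by (simp add: lin_add fd1)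
        then have "chain_add x (bdy d) = chain_add x1 (bdy d1)"
          unfolding x1_def by (metis ca_assoc ca_comm)
        moreover have "d \<subseteq> up" unfolding d_def using ca_sub[of d1 "{\<tau>}"] d1(1) \<tau>up by blast
        moreover have "\<forall>\<tau>\<in>d. dim \<tau> = q + 1" unfolding d_def using ca_sub[of d1 "{\<tau>}"] d1(2) dimt by blast
        ultimately show ?thesis using d1(3) by (intro exI[of _ d]) simp
      qed
    qed
  qed
  have h: "\<forall>\<sigma>\<in>x \<inter> low. t \<sigma> < L + int n0" using L assms(1) by blast
  show ?thesis by (rule mp[OF mp[OF mp[OF spec[OF main[of n0], of x] assms(1)] assms(2)] h])
qed

end

context ms begin

lemma K1:
  assumes g1: "\<forall>c\<in>crit. f c = {c}" and g2: "\<forall>\<tau>\<in>up. f \<tau> = {} \<and> lin f {\<rho>. F \<rho> \<tau>} = {}"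
    and y: "y \<subseteq> C" "d \<subseteq> up" "chain_add y (bdy d) \<inter> low = {}"
  shows "lin f y = crit \<inter> chain_add y (bdy d)"
proof -
  define y' where "y' = chain_add y (bdy d)"
  have fd: "finite d" using finite_subset[OF subset_trans[OF y(2) up_C] finC] .
  have y'C: "y' \<subseteq> C" unfolding y'_def using ca_sub[of y "bdy d"] y(1) bdy_sub[of d] by blast
  have fy': "finite y'" using finite_subset[OF y'C finC] .
  have fb: "finite (bdy d)" using finite_subset[OF bdy_sub finC] .
  have "y = chain_add y' (bdy d)" unfolding y'_def by (metis ca_assoc ca_self ca_empty(1))
  then have e1: "lin f y = chain_add (lin f y') (lin f (bdy d))" using lin_add[OF fy' fb] by simp
  have "lin f (bdy d) = lin (\<lambda>\<tau>. lin f {\<rho>. F \<rho> \<tau>}) d"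
    by (rule lin_comp[OF finC subset_trans[OF y(2) up_C] bd_sub])
  also have "\<dots> = {}" by (rule lin_zero) (use g2 y(2) in blast)
  finally have e2: "lin f (bdy d) = {}" .
  have "lin f y' = lin (\<lambda>\<sigma>. if \<sigma> \<in> crit then {\<sigma>} else {}) y'"
  proof (rule lin_cong)
    fix \<sigma> assume s: "\<sigma> \<in> y'"
    then have "\<sigma> \<in> C" "\<sigma> \<notin> low" using y'C y(3) unfolding y'_def by auto
    then have "\<sigma> \<in> crit \<or> \<sigma> \<in> up" using partC by blast
    then show "f \<sigma> = (if \<sigma> \<in> crit then {\<sigma>} else {})"
    proof
      assume "\<sigma> \<in> crit" then show ?thesis using g1 by simp
    next
      assume "\<sigma> \<in> up" then show ?thesis using g2 d_cu by auto
    qed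
  qed
  also have "\<dots> = crit \<inter> y'" by (rule lin_diag)
  finally show ?thesis using e1 e2 unfolding y'_def by simp
qed

lemma ref_exists: "\<exists>f. is_ref C F dim crit up f"
proof -
  define Dx where "Dx a = (SOME d. d \<subseteq> up \<and> (\<forall>\<tau>\<in>d. dim \<tau> = dim a + 1) \<and> chain_add {a} (bdy d) \<inter> low = {})" for a
  have Dx: "Dx a \<subseteq> up \<and> (\<forall>\<tau>\<in>Dx a. dim \<tau> = dim a + 1) \<and> chain_add {a} (bdy (Dx a)) \<inter> low = {}"
    if "a \<in> C" for a
    unfolding Dx_def by (rule someI_ex) (rule reduce, use that in auto)
  have Dx1: "a \<in> C \<Longrightarrow> Dx a \<subseteq> up" for a using Dx by blast
  have Dx2: "a \<in> C \<Longrightarrow> \<tau> \<in> Dx a \<Longrightarrow> dim \<tau> = dim a + 1" for a \<tau> using Dx by blast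
  have Dx3: "a \<in> C \<Longrightarrow> chain_add {a} (bdy (Dx a)) \<inter> low = {}" for a using Dx by blast
  define f0 where "f0 a = (if a \<in> C then crit \<inter> chain_add {a} (bdy (Dx a)) else {})" for a
  have lin_f0: "lin f0 y = crit \<inter> chain_add y (bdy (lin Dx y)) \<and> chain_add y (bdy (lin Dx y)) \<inter> low = {} \<and> lin Dx y \<subseteq> up"
    if yC: "y \<subseteq> C" for y
  proof -
    have fy: "finite y" using finite_subset[OF yC finC] .
    have LDup: "lin Dx y \<subseteq> up"
    proof
      fix b assume "b \<in> lin Dx y"
      then obtain a where "a \<in> y" "b \<in> Dx a" using lin_sub[of Dx y] by blast
      then show "b \<in> up" using Dx1[of a] yC by blast
    qed
    have comp: "bdy (lin Dx y) = lin (\<lambda>a. bdy (Dx a)) y"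
    proof (rule lin_comp[OF finC yC])
      fix a assume "a \<in> y"
      then show "Dx a \<subseteq> C" using Dx1[of a] yC up_C by blast
    qed
    define G where "G a = chain_add {a} (bdy (Dx a))" for a
    have linG: "lin G y = chain_add y (bdy (lin Dx y))"
      unfolding G_def comp by (simp add: lin_add_fun[OF fy] lin_id)
    have "lin f0 y = lin (\<lambda>a. crit \<inter> G a) y" by (rule lin_cong) (use yC in \<open>auto simp: f0_def G_def\<close>)
    also have "\<dots> = crit \<inter> lin G y" by (rule lin_inter)
    finally have 1: "lin f0 y = crit \<inter> chain_add y (bdy (lin Dx y))" using linG by simp
    have "low \<inter> lin G y = lin (\<lambda>a. low \<inter> G a) y" by (rule lin_inter[symmetric])
    also have "\<dots> = {}"
    proof (rule lin_zero)
      fix a assume "a \<in> y"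
      then have "chain_add {a} (bdy (Dx a)) \<inter> low = {}" using Dx3[of a] yC by blast
      then show "low \<inter> G a = {}" unfolding G_def by blast
    qed
    finally have 2: "chain_add y (bdy (lin Dx y)) \<inter> low = {}" using linG by auto
    show ?thesis using 1 2 LDup by blast
  qed
  have f0_char: "lin f0 y = crit \<inter> chain_add y (bdy d)"
    if yC: "y \<subseteq> C" and dup: "d \<subseteq> up" and dl: "chain_add y (bdy d) \<inter> low = {}" for y d
  proof -
    have L: "lin f0 y = crit \<inter> chain_add y (bdy (lin Dx y))" "chain_add y (bdy (lin Dx y)) \<inter> low = {}" "lin Dx y \<subseteq> up"
      using lin_f0[OF yC] by auto
    define e where "e = chain_add (lin Dx y) d"
    have eup: "e \<subseteq> up" unfolding e_def using ca_sub[of "lin Dx y" d] L(3) dup by blast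
    have f1: "finite (lin Dx y)" using finite_subset[OF subset_trans[OF L(3) up_C] finC] .
    have f2: "finite d" using finite_subset[OF subset_trans[OF dup up_C] finC] .
    have "bdy e = chain_add (bdy (lin Dx y)) (bdy d)" unfolding e_def by (rule lin_add[OF f1 f2])
    then have "bdy e \<inter> low = {}" using L(2) dl by (auto simp: chain_add_def)
    then have "e = {}" by (rule U_lemma[OF eup])
    then have "lin Dx y = d" unfolding e_def by (rule ca_eq_empty)
    then show ?thesis using L(1) by simp
  qed
  have A1: "\<forall>x. x \<notin> C \<longrightarrow> f0 x = {}" by (simp add: f0_def)
  have A2: "f0 x \<subseteq> {c \<in> crit. dim c = dim x}" if xC: "x \<in> C" for x
  proof
    fix b assume b: "b \<in> f0 x"
    then have bc: "b \<in> crit" "b \<in> chain_add {x} (bdy (Dx x))" using xC by (auto simp: f0_def)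
    then have "b = x \<or> b \<in> bdy (Dx x)" using ca_sub[of "{x}" "bdy (Dx x)"] by blast
    then have "dim b = dim x"
    proof
      assume "b \<in> bdy (Dx x)"
      then obtain \<tau> where "\<tau> \<in> Dx x" "F b \<tau>" using lin_sub[of "\<lambda>\<nu>. {\<rho>. F \<rho> \<nu>}" "Dx x"] by blast
      then show ?thesis using Dx2[OF xC, of \<tau>] F_dim[of b \<tau>] by simp
    qed simp
    then show "b \<in> {c \<in> crit. dim c = dim x}" using bc by simp
  qed
  have A3: "f0 c = {c}" if c: "c \<in> crit" for c
  proof -
    have cC: "c \<in> C" using c crit_C by blast
    have "f0 c = lin f0 {c}" by simp
    also have "\<dots> = crit \<inter> chain_add {c} (bdy {})"
      by (rule f0_char) (use cC c d_cl in auto)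
    finally show "f0 c = {c}" using c by simp
  qed
  have A4: "f0 \<tau> = {} \<and> lin f0 {\<rho>. F \<rho> \<tau>} = {}" if t: "\<tau> \<in> up" for \<tau>
  proof -
    have tC: "\<tau> \<in> C" using t up_C by blast
    have "f0 \<tau> = lin f0 {\<tau>}" by simp
    also have "\<dots> = crit \<inter> chain_add {\<tau>} (bdy {})"
      by (rule f0_char) (use tC t d_lu in auto)
    finally have 1: "f0 \<tau> = {}" using t d_cu by auto
    have "lin f0 {\<rho>. F \<rho> \<tau>} = crit \<inter> chain_add {\<rho>. F \<rho> \<tau>} (bdy {\<tau>})"
      by (rule f0_char) (use bd_sub t in \<open>auto simp: ca_self\<close>)
    then have 2: "lin f0 {\<rho>. F \<rho> \<tau>} = {}" by (simp add: ca_self)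
    show ?thesis using 1 2 by simp
  qed
  have "is_ref C F dim crit up f0"
    unfolding is_ref_def using A1 A2 A3 A4 by blast
  then show ?thesis by blast
qed

lemma ref_unique: assumes "is_ref C F dim crit up f" "is_ref C F dim crit up g" shows "f = g"
proof
  fix x show "f x = g x"
  proof (cases "x \<in> C")
    case False then show ?thesis using assms unfolding is_ref_def by simp
  next
    case True
    obtain d where d: "d \<subseteq> up" "\<forall>\<tau>\<in>d. dim \<tau> = dim x + 1" "chain_add {x} (bdy d) \<inter> low = {}"
      using reduce[of "{x}" "dim x"] True by auto
    have "f x = lin f {x}" by simp
    also have "\<dots> = crit \<inter> chain_add {x} (bdy d)"
      by (rule K1) (use assms(1) d True in \<open>auto simp: is_ref_def\<close>)
    also have "\<dots> = lin g {x}"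
      by (rule K1[symmetric]) (use assms(2) d True in \<open>auto simp: is_ref_def\<close>)
    finally show ?thesis by simp
  qed
qed

lemma ref_ex1: "\<exists>!f. is_ref C F dim crit up f"
  using ref_exists ref_unique by blast

lemma ref_is: "is_ref C F dim crit up (THE f. is_ref C F dim crit up f)"
  by (rule theI'[OF ref_ex1])

lemma ref_char: "y \<subseteq> C \<Longrightarrow> d \<subseteq> up \<Longrightarrow> chain_add y (bdy d) \<inter> low = {} \<Longrightarrow>
  lin (THE f. is_ref C F dim crit up f) y = crit \<inter> chain_add y (bdy d)"
  by (rule K1) (use ref_is in \<open>auto simp: is_ref_def\<close>)

lemma dual: "ms C (\<lambda>x y. F y x) (\<lambda>x. - dim x) crit up low (\<lambda>x y. P y x) (\<lambda>x. - t x)"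
proof (unfold_locales)
  show "finite C" by (rule finC)
  show "\<And>\<rho> \<nu>. F \<nu> \<rho> \<Longrightarrow> \<rho> \<in> C \<and> \<nu> \<in> C" using F_C by blast
  show "\<And>\<rho> \<nu>. F \<nu> \<rho> \<Longrightarrow> - dim \<nu> = - dim \<rho> + 1" using F_dim by fastforce
  show "C = crit \<union> up \<union> low" using partC by blast
  show "crit \<inter> up = {}" by (rule d_cu)
  show "crit \<inter> low = {}" by (rule d_cl)
  show "up \<inter> low = {}" using d_lu by blast
  show "\<And>\<sigma> \<tau>. P \<tau> \<sigma> \<Longrightarrow> \<sigma> \<in> up \<and> \<tau> \<in> low" using P_lu by blast
  show "\<And>\<sigma>. \<sigma> \<in> up \<Longrightarrow> \<exists>\<tau>. P \<tau> \<sigma>" using up_ex by blast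
  show "\<And>\<tau>. \<tau> \<in> low \<Longrightarrow> \<exists>\<sigma>. P \<tau> \<sigma>" using low_ex by blast
  show "\<And>\<sigma> \<tau>. P \<tau> \<sigma> \<Longrightarrow> F \<tau> \<sigma>" using P_F by blast
  show "\<And>\<sigma> \<tau>. P \<tau> \<sigma> \<Longrightarrow> - t \<sigma> = - t \<tau>" using P_t by fastforce
  show "\<And>\<rho> \<nu>. F \<nu> \<rho> \<Longrightarrow> - t \<rho> \<le> - t \<nu>" using F_t by fastforce
  show "\<And>\<rho> \<nu>. F \<nu> \<rho> \<Longrightarrow> - t \<rho> = - t \<nu> \<Longrightarrow> P \<nu> \<rho>" using F_teq by fastforce
  show "\<And>x y. x \<in> C \<Longrightarrow> y \<in> C \<Longrightarrow> - t x = - t y \<Longrightarrow> x = y \<or> P y x \<or> P x y" using t_eq by fastforce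
  show "\<And>\<rho> \<nu>. even (card {\<mu>. F \<mu> \<rho> \<and> F \<nu> \<mu>})"
  proof -
    fix \<rho> \<nu>
    have "{\<mu>. F \<mu> \<rho> \<and> F \<nu> \<mu>} = {\<mu>. F \<nu> \<mu> \<and> F \<mu> \<rho>}" by blast
    then show "even (card {\<mu>. F \<mu> \<rho> \<and> F \<nu> \<mu>})" using dd[of \<nu> \<rho>] by simp
  qed
qed

end

context ms begin

lemma bdy_bdy: assumes "x \<subseteq> C" shows "bdy (bdy x) = {}"
proof -
  have "bdy (bdy x) = lin (\<lambda>\<tau>. bdy {\<rho>. F \<rho> \<tau>}) x"
    by (rule lin_comp[OF finC assms bd_sub])
  also have "\<dots> = {}"
  proof (rule lin_zero)
    fix \<tau>
    have "\<And>a. {\<sigma>\<in>{\<rho>. F \<rho> \<tau>}. a \<in> {\<rho>. F \<rho> \<sigma>}} = {\<mu>. F a \<mu> \<and> F \<mu> \<tau>}" by blast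
    then show "bdy {\<rho>. F \<rho> \<tau>} = {}" unfolding lin_def using dd by simp
  qed
  finally show ?thesis .
qed

theorem main:
  assumes zC: "z \<subseteq> C" and zd: "\<forall>a\<in>z. dim a = q" and zc: "bdy z = {}"
  shows "\<exists>d. d \<subseteq> {x\<in>C. dim x = q + 1} \<and>
    chain_add (lin (\<lambda>\<kappa>. {\<nu>\<in>C. \<kappa> \<in> (THE f. is_ref C (\<lambda>x y. F y x) (\<lambda>x. - dim x) crit low f) \<nu>})
                   (lin (THE f. is_ref C F dim crit up f) z)) z = bdy d"
proof -
  interpret D: ms C "\<lambda>x y. F y x" "\<lambda>x. - dim x" crit up low "\<lambda>x y. P y x" "\<lambda>x. - t x"
    by (rule dual)
  define CR where "CR = (THE f. is_ref C (\<lambda>x y. F y x) (\<lambda>x. - dim x) crit low f)"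
  have CRis: "is_ref C (\<lambda>x y. F y x) (\<lambda>x. - dim x) crit low CR" unfolding CR_def by (rule D.ref_is)
  have CR_crit: "\<And>c. c \<in> crit \<Longrightarrow> CR c = {c}" using CRis unfolding is_ref_def by blast
  have CR_low: "\<And>\<sigma>. \<sigma> \<in> low \<Longrightarrow> CR \<sigma> = {}" using CRis unfolding is_ref_def by blast
  obtain d where d: "d \<subseteq> up" "\<forall>\<tau>\<in>d. dim \<tau> = q + 1" "chain_add z (bdy d) \<inter> low = {}"
    using reduce[OF zC zd] by blast
  define z' where "z' = chain_add z (bdy d)"
  have z'C: "z' \<subseteq> C" unfolding z'_def using ca_sub[of z "bdy d"] zC bdy_sub[of d] by blast
  have fz': "finite z'" using finite_subset[OF z'C finC] .
  have fz: "finite z" using finite_subset[OF zC finC] .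
  have fbd: "finite (bdy d)" using finite_subset[OF bdy_sub finC] .
  have dC: "d \<subseteq> C" using d(1) up_C by blast
  have z'low: "z' \<inter> low = {}" using d(3) unfolding z'_def .
  have c: "lin (THE f. is_ref C F dim crit up f) z = crit \<inter> z'"
    unfolding z'_def by (rule ref_char[OF zC d(1) d(3)])
  define E where "E = lin (\<lambda>\<kappa>. {\<nu>\<in>C. \<kappa> \<in> CR \<nu>}) (crit \<inter> z')"
  have EC: "E \<subseteq> C" unfolding E_def using lin_sub[of "\<lambda>\<kappa>. {\<nu>\<in>C. \<kappa> \<in> CR \<nu>}" "crit \<inter> z'"] by blast
  have fE: "finite E" using finite_subset[OF EC finC] .
  have Emem: "\<nu> \<in> E \<longleftrightarrow> odd (card (crit \<inter> z' \<inter> CR \<nu>))" if "\<nu> \<in> C" for \<nu>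
  proof -
    have "{\<kappa>\<in>crit \<inter> z'. \<nu> \<in> {\<nu>\<in>C. \<kappa> \<in> CR \<nu>}} = crit \<inter> z' \<inter> CR \<nu>" using that by blast
    then show ?thesis unfolding E_def lin_def by simp
  qed
  define u where "u = chain_add E z'"
  have uup: "u \<subseteq> up"
  proof
    fix \<nu> assume nu: "\<nu> \<in> u"
    then have \<nu>C: "\<nu> \<in> C" using ca_sub[of E z'] EC z'C unfolding u_def by blast
    show "\<nu> \<in> up"
    proof (rule ccontr)
      assume "\<nu> \<notin> up"
      then have "\<nu> \<in> crit \<or> \<nu> \<in> low" using \<nu>C partC by blast
      then show False
      proof
        assume cr: "\<nu> \<in> crit"
        have "crit \<inter> z' \<inter> CR \<nu> = (if \<nu> \<in> z' then {\<nu>} else {})" using CR_crit[OF cr] cr by auto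
        then have "\<nu> \<in> E \<longleftrightarrow> \<nu> \<in> z'" using Emem[OF \<nu>C] by simp
        then show False using nu unfolding u_def chain_add_def by blast
      next
        assume lo: "\<nu> \<in> low"
        have "\<nu> \<notin> E" using Emem[OF \<nu>C] CR_low[OF lo] by simp
        moreover have "\<nu> \<notin> z'" using z'low lo by blast
        ultimately show False using nu unfolding u_def chain_add_def by blast
      qed
    qed
  qed
  have bz': "bdy z' = {}"
  proof -
    have "bdy z' = chain_add (bdy z) (bdy (bdy d))" unfolding z'_def by (rule lin_add[OF fz fbd])
    then show ?thesis using zc bdy_bdy[OF dC] by simp
  qed
  have bE: "bdy E = {}"
  proof -
    have bE_eq: "bdy E = lin (\<lambda>\<kappa>. bdy {\<nu>\<in>C. \<kappa> \<in> CR \<nu>}) (crit \<inter> z')"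
      unfolding E_def by (rule lin_comp[OF finC]) (use z'C in auto)
    have "\<rho> \<notin> bdy E" for \<rho>
    proof -
      have key: "\<rho> \<in> bdy {\<nu>\<in>C. \<kappa> \<in> CR \<nu>} \<longleftrightarrow> \<kappa> \<in> lin CR {\<nu>. F \<rho> \<nu>}" for \<kappa>
      proof -
        have "{\<sigma>\<in>{\<nu>\<in>C. \<kappa> \<in> CR \<nu>}. \<rho> \<in> {\<rho>. F \<rho> \<sigma>}} = {\<sigma>\<in>{\<nu>. F \<rho> \<nu>}. \<kappa> \<in> CR \<sigma>}"
          using F_C by blast
        then show ?thesis unfolding lin_def by simp
      qed
      have cbC: "{\<nu>. F \<rho> \<nu>} \<subseteq> C" using F_C by blast
      have cbd: "\<forall>a\<in>{\<nu>. F \<rho> \<nu>}. - dim a = - dim \<rho> - 1" using F_dim by fastforce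
      obtain e where e: "e \<subseteq> low" "chain_add {\<nu>. F \<rho> \<nu>} (lin (\<lambda>\<nu>. {\<rho>'. F \<nu> \<rho>'}) e) \<inter> up = {}"
        using D.reduce[OF cbC cbd] by blast
      define y' where "y' = chain_add {\<nu>. F \<rho> \<nu>} (lin (\<lambda>\<nu>. {\<rho>'. F \<nu> \<rho>'}) e)"
      have lc: "lin CR {\<nu>. F \<rho> \<nu>} = crit \<inter> y'"
        unfolding CR_def y'_def by (rule D.ref_char[OF cbC e(1) e(2)])
      have fe: "finite e" using finite_subset[OF subset_trans[OF e(1) low_C] finC] .
      define g where "g = chain_add {\<rho>} e"
      have fg: "finite g" unfolding g_def using finite_subset[OF ca_sub[of "{\<rho>}" e]] fe by simp
      have y'g: "y' = lin (\<lambda>\<mu>. {\<kappa>. F \<mu> \<kappa>}) g"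
        unfolding y'_def g_def by (simp add: lin_add[OF _ fe])
      have y'C: "y' \<subseteq> C" unfolding y'_def using ca_sub[of "{\<nu>. F \<rho> \<nu>}" "lin (\<lambda>\<nu>. {\<rho>'. F \<nu> \<rho>'}) e"]
          cbC D.bdy_sub[of e] by blast
      have "\<rho> \<in> bdy E \<longleftrightarrow> odd (card {\<kappa>\<in>crit \<inter> z'. \<rho> \<in> bdy {\<nu>\<in>C. \<kappa> \<in> CR \<nu>}})"
        by (subst bE_eq) (simp only: lin_def mem_Collect_eq)
      also have "{\<kappa>\<in>crit \<inter> z'. \<rho> \<in> bdy {\<nu>\<in>C. \<kappa> \<in> CR \<nu>}} = z' \<inter> y'"
      proof -
        have "{\<kappa>\<in>crit \<inter> z'. \<rho> \<in> bdy {\<nu>\<in>C. \<kappa> \<in> CR \<nu>}} = crit \<inter> z' \<inter> y'"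
          using key lc by blast
        also have "\<dots> = z' \<inter> y'" using z'C y'C z'low e(2) partC unfolding y'_def by blast
        finally show ?thesis .
      qed
      also have "odd (card (z' \<inter> y')) \<longleftrightarrow> odd (card (g \<inter> bdy z'))"
        unfolding y'g by (rule adj[OF fz' fg])
      finally show "\<rho> \<notin> bdy E" using bz' by simp
    qed
    then show ?thesis by blast
  qed
  have "bdy u = chain_add (bdy E) (bdy z')" unfolding u_def by (rule lin_add[OF fE fz'])
  then have "bdy u \<inter> low = {}" using bE bz' by simp
  then have "u = {}" by (rule U_lemma[OF uup])
  then have Ez: "E = z'" unfolding u_def by (rule ca_eq_empty)
  have "chain_add (lin (\<lambda>\<kappa>. {\<nu>\<in>C. \<kappa> \<in> CR \<nu>}) (lin (THE f. is_ref C F dim crit up f) z)) z = chain_add z' z"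
    using Ez unfolding c E_def by simp
  also have "\<dots> = bdy d" unfolding z'_def by (metis ca_assoc ca_comm ca_self ca_empty(2))
  finally have fin: "chain_add (lin (\<lambda>\<kappa>. {\<nu>\<in>C. \<kappa> \<in> CR \<nu>}) (lin (THE f. is_ref C F dim crit up f) z)) z = bdy d" .
  have "d \<subseteq> {x\<in>C. dim x = q + 1}" using d(1,2) up_C by blast
  then show ?thesis using fin unfolding CR_def by blast
qed

end

definition Fk :: "'v set set \<Rightarrow> 'v set \<Rightarrow> 'v set \<Rightarrow> bool" where
  "Fk K \<rho> \<nu> \<longleftrightarrow> \<rho> \<in> K \<and> \<nu> \<in> K \<and> \<rho> \<subseteq> \<nu> \<and> card \<rho> + 1 = card \<nu>"

definition closedset :: "'v set set \<Rightarrow> bool" where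
  "closedset S \<longleftrightarrow> (\<forall>\<sigma>\<in>S. \<forall>\<tau>. \<tau> \<subseteq> \<sigma> \<and> \<tau> \<noteq> {} \<longrightarrow> \<tau> \<in> S)"

lemma fp_D: "free_pair K \<sigma> \<tau> \<Longrightarrow> \<sigma> \<in> K \<and> \<tau> \<in> K \<and> \<sigma> \<subset> \<tau>"
  unfolding free_pair_def by blast
lemma fp_only: "free_pair K \<sigma> \<tau> \<Longrightarrow> \<nu> \<in> K \<Longrightarrow> \<sigma> \<subseteq> \<nu> \<Longrightarrow> \<nu> = \<sigma> \<or> \<nu> = \<tau>"
  unfolding free_pair_def by blast
lemma facet_D: "facet K \<nu> \<Longrightarrow> \<nu> \<in> K"
  unfolding facet_def by blast
lemma facet_only: "facet K \<nu> \<Longrightarrow> \<mu> \<in> K \<Longrightarrow> \<nu> \<subseteq> \<mu> \<Longrightarrow> \<mu> = \<nu>"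
  unfolding facet_def by blast
lemma closedD: "closedset S \<Longrightarrow> \<sigma> \<in> S \<Longrightarrow> \<tau> \<subseteq> \<sigma> \<Longrightarrow> \<tau> \<noteq> {} \<Longrightarrow> \<tau> \<in> S"
  unfolding closedset_def by blast

locale mseq =
  fixes K :: "'v set set" and W :: "'v set set list"
  assumes sc: "simplicial_complex K" and mw: "morse_seq W K"
begin

definition Dl :: "nat \<Rightarrow> 'v set set" where "Dl i = W ! Suc i - W ! i"
definition tn :: "'v set \<Rightarrow> nat" where "tn a = (LEAST i. a \<in> W ! Suc i)"
definition Pk :: "'v set \<Rightarrow> 'v set \<Rightarrow> bool" where
  "Pk \<sigma> \<tau> \<longleftrightarrow> (\<exists>i. Suc i < length W \<and> \<sigma> \<subset> \<tau> \<and> Dl i = {\<sigma>, \<tau>})"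

lemma W_ne: "W \<noteq> []" and W0: "W ! 0 = {}" and Wlast: "W ! (length W - 1) = K"
  and step: "Suc i < length W \<Longrightarrow> elem_expansion (W ! Suc i) (W ! i) \<or> elem_filling (W ! Suc i) (W ! i)"
  using mw unfolding morse_seq_def by (auto simp: last_conv_nth)

lemma finK: "finite K" and K_fin: "\<sigma> \<in> K \<Longrightarrow> finite \<sigma>" and K_ne: "\<sigma> \<in> K \<Longrightarrow> \<sigma> \<noteq> {}"
  and K_cl: "\<sigma> \<in> K \<Longrightarrow> \<tau> \<subseteq> \<sigma> \<Longrightarrow> \<tau> \<noteq> {} \<Longrightarrow> \<tau> \<in> K"
  using sc unfolding simplicial_complex_def by blast+

lemma step_cases: assumes "Suc i < length W"
  obtains (fill) \<nu> where "facet (W ! Suc i) \<nu>" "W ! i = W ! Suc i - {\<nu>}" "Dl i = {\<nu>}"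
  | (exp) \<sigma> \<tau> where "free_pair (W ! Suc i) \<sigma> \<tau>" "W ! i = W ! Suc i - {\<sigma>, \<tau>}" "Dl i = {\<sigma>, \<tau>}"
proof (cases "elem_filling (W ! Suc i) (W ! i)")
  case True
  then obtain \<nu> where \<nu>: "facet (W ! Suc i) \<nu>" "W ! i = W ! Suc i - {\<nu>}" unfolding elem_filling_def by blast
  have "\<nu> \<in> W ! Suc i" using facet_D[OF \<nu>(1)] .
  then have D: "Dl i = {\<nu>}" unfolding Dl_def \<nu>(2) by blast
  show ?thesis by (rule fill[OF \<nu> D])
next
  case False
  then have "elem_expansion (W ! Suc i) (W ! i)" using step[OF assms] by blast
  then obtain \<sigma> \<tau> where st: "free_pair (W ! Suc i) \<sigma> \<tau>" "W ! i = W ! Suc i - {\<sigma>, \<tau>}" unfolding elem_expansion_def by blast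
  have "\<sigma> \<in> W ! Suc i" "\<tau> \<in> W ! Suc i" using fp_D[OF st(1)] by blast+
  then have D: "Dl i = {\<sigma>, \<tau>}" unfolding Dl_def st(2) by blast
  show ?thesis by (rule exp[OF st D])
qed

lemma mono1: "Suc i < length W \<Longrightarrow> W ! i \<subseteq> W ! Suc i"
proof -
  assume a: "Suc i < length W"
  show ?thesis by (cases rule: step_cases[OF a]) auto
qed

lemma mono: "i \<le> j \<Longrightarrow> j < length W \<Longrightarrow> W ! i \<subseteq> W ! j"
proof (induction j)
  case 0 then show ?case by simp
next
  case (Suc j)
  show ?case
  proof (cases "i = Suc j")
    case False
    then have "W ! i \<subseteq> W ! j" using Suc by simp
    then show ?thesis using mono1[of j] Suc.prems by blast
  qed simp
qed

lemma subK: "i < length W \<Longrightarrow> W ! i \<subseteq> K"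
  using mono[of i "length W - 1"] Wlast by simp

lemma Dl_sub: "Suc i < length W \<Longrightarrow> Dl i \<subseteq> K"
  unfolding Dl_def using subK[of "Suc i"] by blast

lemma closed_back: "k < length W \<Longrightarrow> closedset (W ! (length W - 1 - k))"
proof (induction k)
  case 0
  have "closedset K" unfolding closedset_def using K_cl by blast
  then show ?case using Wlast by simp
next
  case (Suc k)
  define i where "i = length W - 1 - Suc k"
  have si: "Suc i = length W - 1 - k" "Suc i < length W" unfolding i_def using Suc.prems by auto
  have cl: "closedset (W ! Suc i)" using Suc si by simp
  have "closedset (W ! i)"
  using si(2) proof (cases rule: step_cases)
    case (fill \<nu>)
    note \<nu> = fill
    show ?thesis unfolding closedset_def
    proof (intro ballI allI impI)
      fix s \<tau> assume s: "s \<in> W ! i" and t: "\<tau> \<subseteq> s \<and> \<tau> \<noteq> {}"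
      have s1: "s \<in> W ! Suc i" "s \<noteq> \<nu>" using s \<nu>(2) by auto
      have tW: "\<tau> \<in> W ! Suc i" using closedD[OF cl s1(1)] t by blast
      moreover have "\<tau> \<noteq> \<nu>"
      proof
        assume "\<tau> = \<nu>"
        then have "s = \<nu>" using facet_only[OF \<nu>(1) s1(1)] t by blast
        then show False using s1(2) by simp
      qed
      ultimately show "\<tau> \<in> W ! i" using \<nu>(2) by simp
    qed
  next
    case (exp \<sigma>0 \<tau>0)
    note fp = exp
    show ?thesis unfolding closedset_def
    proof (intro ballI allI impI)
      fix s \<tau> assume s: "s \<in> W ! i" and t: "\<tau> \<subseteq> s \<and> \<tau> \<noteq> {}"
      have s1: "s \<in> W ! Suc i" "s \<noteq> \<sigma>0" "s \<noteq> \<tau>0" using s fp(2) by auto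
      have tW: "\<tau> \<in> W ! Suc i" using closedD[OF cl s1(1)] t by blast
      have st: "\<sigma>0 \<subset> \<tau>0" using fp_D[OF fp(1)] by blast
      have n1: "\<tau> \<noteq> \<sigma>0"
      proof
        assume "\<tau> = \<sigma>0"
        then have "s = \<sigma>0 \<or> s = \<tau>0" using fp_only[OF fp(1) s1(1)] t by blast
        then show False using s1 by simp
      qed
      have n2: "\<tau> \<noteq> \<tau>0"
      proof
        assume "\<tau> = \<tau>0"
        then have "\<sigma>0 \<subseteq> s" using st t by blast
        then have "s = \<sigma>0 \<or> s = \<tau>0" using fp_only[OF fp(1) s1(1)] by blast
        then show False using s1 by simp
      qed
      show "\<tau> \<in> W ! i" using tW n1 n2 fp(2) by simp
    qed
  qed
  then show ?case unfolding i_def .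
qed

lemma closed: "i < length W \<Longrightarrow> \<sigma> \<in> W ! i \<Longrightarrow> \<tau> \<subseteq> \<sigma> \<Longrightarrow> \<tau> \<noteq> {} \<Longrightarrow> \<tau> \<in> W ! i"
proof -
  assume a: "i < length W" "\<sigma> \<in> W ! i" "\<tau> \<subseteq> \<sigma>" "\<tau> \<noteq> {}"
  have e: "length W - 1 - (length W - 1 - i) = i" using a(1) by simp
  have "length W - 1 - i < length W" using a(1) by simp
  then have "closedset (W ! i)" using closed_back[of "length W - 1 - i"] e by simp
  then show "\<tau> \<in> W ! i" using a unfolding closedset_def by blast
qed

lemma tn_prop: assumes "a \<in> K" shows "Suc (tn a) < length W" "a \<in> Dl (tn a)"
proof -
  have N: "length W - 1 \<noteq> 0" using assms Wlast W0 by (metis empty_iff)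
  then obtain m where m: "length W - 1 = Suc m" by (metis not0_implies_Suc)
  have am: "a \<in> W ! Suc m" using assms Wlast m by simp
  have le: "tn a \<le> m" unfolding tn_def by (rule Least_le) (rule am)
  have in1: "a \<in> W ! Suc (tn a)" unfolding tn_def by (rule LeastI) (rule am)
  show "Suc (tn a) < length W" using le m by simp
  have "a \<notin> W ! tn a"
  proof (cases "tn a")
    case 0 then show ?thesis using W0 by simp
  next
    case (Suc j)
    have "\<not> a \<in> W ! Suc j" using not_less_Least[of j "\<lambda>i. a \<in> W ! Suc i"] Suc unfolding tn_def by simp
    then show ?thesis using Suc by simp
  qed
  then show "a \<in> Dl (tn a)" using in1 unfolding Dl_def by simp
qed

lemma tn_unique: assumes "Suc i < length W" "a \<in> Dl i" shows "tn a = i"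
proof -
  have a1: "a \<in> W ! Suc i" "a \<notin> W ! i" using assms(2) unfolding Dl_def by auto
  have le: "tn a \<le> i" unfolding tn_def by (rule Least_le) (rule a1(1))
  have in1: "a \<in> W ! Suc (tn a)" unfolding tn_def by (rule LeastI) (rule a1(1))
  show ?thesis
  proof (rule ccontr)
    assume "tn a \<noteq> i"
    then have "Suc (tn a) \<le> i" using le by simp
    then have "W ! Suc (tn a) \<subseteq> W ! i" using mono assms(1) by simp
    then show False using in1 a1(2) by blast
  qed
qed

lemma two_step: assumes "Suc i < length W" "Dl i = {\<sigma>, \<tau>}" "\<sigma> \<subset> \<tau>"
  shows "free_pair (W ! Suc i) \<sigma> \<tau>"
using assms(1) proof (cases rule: step_cases)
  case (fill \<nu>)
  then have "\<sigma> \<in> {\<nu>}" "\<tau> \<in> {\<nu>}" using assms(2) by auto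
  then have "\<sigma> = \<tau>" by simp
  then show ?thesis using assms(3) by simp
next
  case (exp \<sigma>0 \<tau>0)
  have fp: "free_pair (W ! Suc i) \<sigma>0 \<tau>0" "Dl i = {\<sigma>0, \<tau>0}" using exp(1,3) .
  have "\<sigma>0 \<subset> \<tau>0" using fp_D[OF fp(1)] by blast
  moreover have "{\<sigma>0, \<tau>0} = {\<sigma>, \<tau>}" using fp(2) assms(2) by simp
  ultimately have "\<sigma>0 = \<sigma> \<and> \<tau>0 = \<tau>" using assms(3) unfolding doubleton_eq_iff by auto
  then show ?thesis using fp(1) by simp
qed

lemma Pk_card: assumes "Pk \<sigma> \<tau>" shows "card \<tau> = card \<sigma> + 1"
proof -
  obtain i where i: "Suc i < length W" "\<sigma> \<subset> \<tau>" "Dl i = {\<sigma>, \<tau>}" using assms unfolding Pk_def by blast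
  have fp: "free_pair (W ! Suc i) \<sigma> \<tau>" by (rule two_step[OF i(1,3,2)])
  have \<tau>K: "\<tau> \<in> K" using Dl_sub[OF i(1)] i(3) by blast
  have ft: "finite \<tau>" using K_fin[OF \<tau>K] .
  obtain x where x: "x \<in> \<tau>" "x \<notin> \<sigma>" using i(2) by blast
  define \<mu> where "\<mu> = insert x \<sigma>"
  have "\<mu> \<subseteq> \<tau>" "\<mu> \<noteq> {}" unfolding \<mu>_def using x i(2) by auto
  moreover have "\<tau> \<in> W ! Suc i" using fp_D[OF fp] by blast
  ultimately have mW: "\<mu> \<in> W ! Suc i" using closed[OF i(1)] by blast
  have "\<sigma> \<subseteq> \<mu>" "\<mu> \<noteq> \<sigma>" unfolding \<mu>_def using x by auto
  then have "\<mu> = \<tau>" using fp_only[OF fp mW] by blast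
  moreover have "finite \<sigma>" using ft i(2) finite_subset by blast
  ultimately have "card \<tau> = card (insert x \<sigma>)" "finite \<sigma>" unfolding \<mu>_def by simp_all
  then show ?thesis using x(2) by simp
qed

lemma crit_D: "\<nu> \<in> critical W \<Longrightarrow> \<exists>i. Suc i < length W \<and> Dl i = {\<nu>}"
  unfolding critical_def Dl_def by blast
lemma low_eq: "lower_regular W = {\<sigma>. \<exists>\<tau>. Pk \<sigma> \<tau>}"
  unfolding lower_regular_def Pk_def Dl_def by blast
lemma up_eq: "upper_regular W = {\<tau>. \<exists>\<sigma>. Pk \<sigma> \<tau>}"
  unfolding upper_regular_def Pk_def Dl_def by blast
lemma crit_K: "critical W \<subseteq> K"
  using crit_D Dl_sub by blast

lemma Pk_K: "Pk \<sigma> \<tau> \<Longrightarrow> \<sigma> \<in> K \<and> \<tau> \<in> K \<and> tn \<sigma> = tn \<tau>"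
proof -
  assume "Pk \<sigma> \<tau>"
  then obtain i where i: "Suc i < length W" "\<sigma> \<subset> \<tau>" "Dl i = {\<sigma>, \<tau>}" unfolding Pk_def by blast
  have "tn \<sigma> = i" "tn \<tau> = i" using tn_unique[OF i(1)] i(3) by auto
  then show ?thesis using Dl_sub[OF i(1)] i(3) by auto
qed

lemma same_t: assumes "x \<in> K" "y \<in> K" "tn x = tn y"
  shows "x = y \<or> Pk x y \<or> Pk y x"
proof -
  define i where "i = tn x"
  have i: "Suc i < length W" "x \<in> Dl i" "y \<in> Dl i"
    using tn_prop[OF assms(1)] tn_prop(2)[OF assms(2)] assms(3) unfolding i_def by simp_all
  show ?thesis
  using i(1) proof (cases rule: step_cases)
    case (fill \<nu>)
    then show ?thesis using i by auto
  next
    case (exp \<sigma>0 \<tau>0)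
    have fp: "free_pair (W ! Suc i) \<sigma>0 \<tau>0" "Dl i = {\<sigma>0, \<tau>0}" using exp(1,3) .
    have st: "\<sigma>0 \<subset> \<tau>0" using fp_D[OF fp(1)] by blast
    have P: "Pk \<sigma>0 \<tau>0" unfolding Pk_def using i(1) st fp(2) by blast
    show ?thesis using i(2,3) fp(2) P by auto
  qed
qed

lemma dd_K: "even (card {\<mu>. Fk K \<rho> \<mu> \<and> Fk K \<mu> \<nu>})"
proof (cases "\<rho> \<in> K \<and> \<nu> \<in> K \<and> \<rho> \<subseteq> \<nu> \<and> card \<nu> = card \<rho> + 2")
  case False
  then have e: "{\<mu>. Fk K \<rho> \<mu> \<and> Fk K \<mu> \<nu>} = {}" unfolding Fk_def by force
  show ?thesis unfolding e by simp
next
  case True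
  have fn: "finite \<nu>" using K_fin True by blast
  have fr: "finite \<rho>" using fn True finite_subset by blast
  have "card (\<nu> - \<rho>) = 2" using True fn by (simp add: card_Diff_subset fr)
  then obtain a b where ab: "\<nu> - \<rho> = {a, b}" "a \<noteq> b" by (meson card_2_iff)
  have S: "{\<mu>. Fk K \<rho> \<mu> \<and> Fk K \<mu> \<nu>} = {insert a \<rho>, insert b \<rho>}"
  proof
    show "{\<mu>. Fk K \<rho> \<mu> \<and> Fk K \<mu> \<nu>} \<subseteq> {insert a \<rho>, insert b \<rho>}"
    proof
      fix \<mu> assume "\<mu> \<in> {\<mu>. Fk K \<rho> \<mu> \<and> Fk K \<mu> \<nu>}"
      then have m: "\<rho> \<subseteq> \<mu>" "\<mu> \<subseteq> \<nu>" "card \<rho> + 1 = card \<mu>" unfolding Fk_def by auto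
      have fm: "finite \<mu>" using fn m(2) finite_subset by blast
      have "card (\<mu> - \<rho>) = 1" using m fm by (simp add: card_Diff_subset fr)
      then obtain c where c: "\<mu> - \<rho> = {c}" by (meson card_1_singletonE)
      then have "\<mu> = insert c \<rho>" using m(1) by blast
      moreover have "c \<in> {a, b}" using c m(2) ab(1) by blast
      ultimately show "\<mu> \<in> {insert a \<rho>, insert b \<rho>}" by blast
    qed
    show "{insert a \<rho>, insert b \<rho>} \<subseteq> {\<mu>. Fk K \<rho> \<mu> \<and> Fk K \<mu> \<nu>}"
    proof -
      have "Fk K \<rho> (insert c \<rho>) \<and> Fk K (insert c \<rho>) \<nu>" if c: "c \<in> {a, b}" for c
      proof -
        have cn: "c \<in> \<nu>" "c \<notin> \<rho>" using c ab(1) by blast+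
        have sub: "insert c \<rho> \<subseteq> \<nu>" using cn True by blast
        have iK: "insert c \<rho> \<in> K" using K_cl[OF _ sub] True by blast
        have "card (insert c \<rho>) = card \<rho> + 1" using cn fr by simp
        then show ?thesis unfolding Fk_def using iK sub True by auto
      qed
      then show ?thesis by blast
    qed
  qed
  have "insert a \<rho> \<noteq> insert b \<rho>" using ab by blast
  then have "card {insert a \<rho>, insert b \<rho>} = 2" by simp
  then show ?thesis using S by simp
qed

lemma is_ms: "ms K (Fk K) (\<lambda>x. int (card x)) (critical W) (lower_regular W) (upper_regular W) Pk (\<lambda>x. int (tn x))"
proof (unfold_locales)
  show "finite K" by (rule finK)
  show "\<And>\<rho> \<nu>. Fk K \<rho> \<nu> \<Longrightarrow> \<rho> \<in> K \<and> \<nu> \<in> K" unfolding Fk_def by blast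
  show "\<And>\<rho> \<nu>. Fk K \<rho> \<nu> \<Longrightarrow> int (card \<nu>) = int (card \<rho>) + 1" unfolding Fk_def by simp
  show "K = critical W \<union> lower_regular W \<union> upper_regular W"
  proof
    show "critical W \<union> lower_regular W \<union> upper_regular W \<subseteq> K"
      using crit_K Pk_K unfolding low_eq up_eq by blast
    show "K \<subseteq> critical W \<union> lower_regular W \<union> upper_regular W"
    proof
      fix a assume aK: "a \<in> K"
      define i where "i = tn a"
      have i: "Suc i < length W" "a \<in> Dl i" using tn_prop[OF aK] unfolding i_def by auto
      show "a \<in> critical W \<union> lower_regular W \<union> upper_regular W"
      using i(1) proof (cases rule: step_cases)
        case (fill \<nu>)
        note \<nu> = fill
        have "elem_filling (W ! Suc i) (W ! i)" unfolding elem_filling_def using \<nu> by blast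
        then have "\<nu> \<in> critical W" unfolding critical_def using i(1) \<nu>(3) unfolding Dl_def by blast
        then show ?thesis using i(2) \<nu>(3) by simp
      next
        case (exp \<sigma>0 \<tau>0)
        have fp: "free_pair (W ! Suc i) \<sigma>0 \<tau>0" "Dl i = {\<sigma>0, \<tau>0}" using exp(1,3) .
        have st: "\<sigma>0 \<subset> \<tau>0" using fp_D[OF fp(1)] by blast
        have P: "Pk \<sigma>0 \<tau>0" unfolding Pk_def using i(1) st fp(2) by blast
        then show ?thesis using i(2) fp(2) unfolding low_eq up_eq by auto
      qed
    qed
  qed
  show "critical W \<inter> lower_regular W = {}"
  proof (rule ccontr)
    assume "critical W \<inter> lower_regular W \<noteq> {}"
    then obtain a \<tau> where a: "a \<in> critical W" "Pk a \<tau>" unfolding low_eq by blast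
    obtain i where i: "Suc i < length W" "Dl i = {a}" using crit_D[OF a(1)] by blast
    obtain j where j: "Suc j < length W" "a \<subset> \<tau>" "Dl j = {a, \<tau>}" using a(2) unfolding Pk_def by blast
    have "i = j" using tn_unique[OF i(1), of a] tn_unique[OF j(1), of a] i(2) j(3) by simp
    then have "\<tau> \<in> {a}" using i(2) j(3) by auto
    then show False using j(2) by auto
  qed
  show "critical W \<inter> upper_regular W = {}"
  proof (rule ccontr)
    assume "critical W \<inter> upper_regular W \<noteq> {}"
    then obtain a \<sigma> where a: "a \<in> critical W" "Pk \<sigma> a" unfolding up_eq by blast
    obtain i where i: "Suc i < length W" "Dl i = {a}" using crit_D[OF a(1)] by blast
    obtain j where j: "Suc j < length W" "\<sigma> \<subset> a" "Dl j = {\<sigma>, a}" using a(2) unfolding Pk_def by blast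
    have "i = j" using tn_unique[OF i(1), of a] tn_unique[OF j(1), of a] i(2) j(3) by simp
    then have "\<sigma> \<in> {a}" using i(2) j(3) by auto
    then show False using j(2) by auto
  qed
  show "lower_regular W \<inter> upper_regular W = {}"
  proof (rule ccontr)
    assume "lower_regular W \<inter> upper_regular W \<noteq> {}"
    then obtain a \<sigma> \<tau> where a: "Pk a \<tau>" "Pk \<sigma> a" unfolding low_eq up_eq by blast
    obtain i where i: "Suc i < length W" "a \<subset> \<tau>" "Dl i = {a, \<tau>}" using a(1) unfolding Pk_def by blast
    obtain j where j: "Suc j < length W" "\<sigma> \<subset> a" "Dl j = {\<sigma>, a}" using a(2) unfolding Pk_def by blast
    have "i = j" using tn_unique[OF i(1), of a] tn_unique[OF j(1), of a] i(3) j(3) by simp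
    then have "{a, \<tau>} = {\<sigma>, a}" using i(3) j(3) by simp
    then have "\<tau> = \<sigma> \<or> \<tau> = a" by blast
    then show False using i(2) j(2) by blast
  qed
  show "\<And>\<sigma> \<tau>. Pk \<sigma> \<tau> \<Longrightarrow> \<sigma> \<in> lower_regular W \<and> \<tau> \<in> upper_regular W"
    unfolding low_eq up_eq by blast
  show "\<And>\<sigma>. \<sigma> \<in> lower_regular W \<Longrightarrow> \<exists>\<tau>. Pk \<sigma> \<tau>" unfolding low_eq by blast
  show "\<And>\<tau>. \<tau> \<in> upper_regular W \<Longrightarrow> \<exists>\<sigma>. Pk \<sigma> \<tau>" unfolding up_eq by blast
  show "\<And>\<sigma> \<tau>. Pk \<sigma> \<tau> \<Longrightarrow> Fk K \<sigma> \<tau>"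
  proof -
    fix \<sigma> \<tau> assume P: "Pk \<sigma> \<tau>"
    have "\<sigma> \<subseteq> \<tau>" using P unfolding Pk_def by blast
    then show "Fk K \<sigma> \<tau>" unfolding Fk_def using Pk_K[OF P] Pk_card[OF P] by simp
  qed
  show "\<And>\<sigma> \<tau>. Pk \<sigma> \<tau> \<Longrightarrow> int (tn \<sigma>) = int (tn \<tau>)" using Pk_K by simp
  show "\<And>\<rho> \<nu>. Fk K \<rho> \<nu> \<Longrightarrow> int (tn \<rho>) \<le> int (tn \<nu>)"
  proof -
    fix \<rho> \<nu> assume F: "Fk K \<rho> \<nu>"
    then have K: "\<rho> \<in> K" "\<nu> \<in> K" "\<rho> \<subseteq> \<nu>" unfolding Fk_def by auto
    have "\<rho> \<in> W ! Suc (tn \<nu>)"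
      using closed[OF tn_prop(1)[OF K(2)], of \<nu> \<rho>] tn_prop(2)[OF K(2)] K(3) K_ne[OF K(1)]
      unfolding Dl_def by blast
    then have "tn \<rho> \<le> tn \<nu>" unfolding tn_def by (rule Least_le)
    then show "int (tn \<rho>) \<le> int (tn \<nu>)" by simp
  qed
  show "\<And>\<rho> \<nu>. Fk K \<rho> \<nu> \<Longrightarrow> int (tn \<rho>) = int (tn \<nu>) \<Longrightarrow> Pk \<rho> \<nu>"
  proof -
    fix \<rho> \<nu> assume F: "Fk K \<rho> \<nu>" and eq: "int (tn \<rho>) = int (tn \<nu>)"
    then have K: "\<rho> \<in> K" "\<nu> \<in> K" "\<rho> \<subseteq> \<nu>" "card \<rho> + 1 = card \<nu>" unfolding Fk_def by auto
    have "\<rho> = \<nu> \<or> Pk \<rho> \<nu> \<or> Pk \<nu> \<rho>" using same_t[OF K(1,2)] eq by simp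
    moreover have "\<rho> \<noteq> \<nu>" using K(4) by auto
    moreover have "\<not> Pk \<nu> \<rho>" using Pk_card[of \<nu> \<rho>] K(4) by auto
    ultimately show "Pk \<rho> \<nu>" by blast
  qed
  show "\<And>x y. x \<in> K \<Longrightarrow> y \<in> K \<Longrightarrow> int (tn x) = int (tn y) \<Longrightarrow> x = y \<or> Pk x y \<or> Pk y x"
    using same_t by simp
  show "\<And>\<rho> \<nu>. even (card {\<mu>. Fk K \<rho> \<mu> \<and> Fk K \<mu> \<nu>})" by (rule dd_K)
qed

lemma bd_eq: "\<nu> \<in> K \<Longrightarrow> bd K \<nu> = {\<rho>. Fk K \<rho> \<nu>}"
  unfolding bd_def Fk_def by auto
lemma cobd_eq: "\<sigma> \<in> K \<Longrightarrow> cobd K \<sigma> = {\<rho>. Fk K \<sigma> \<rho>}"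
  unfolding cobd_def Fk_def by auto

lemma ref_eq: "ref_map W K = (THE f. is_ref K (Fk K) (\<lambda>x. int (card x)) (critical W) (upper_regular W) f)"
proof -
  have "is_ref_map W K f \<longleftrightarrow> is_ref K (Fk K) (\<lambda>x. int (card x)) (critical W) (upper_regular W) f" for f
  proof -
    have upK: "upper_regular W \<subseteq> K" using ms.up_C[OF is_ms] .
    have "(\<forall>\<tau>\<in>upper_regular W. f \<tau> = {} \<and> lin f (bd K \<tau>) = {}) \<longleftrightarrow>
          (\<forall>\<tau>\<in>upper_regular W. f \<tau> = {} \<and> lin f {\<rho>. Fk K \<rho> \<tau>} = {})"
    proof -
      have e: "\<And>\<tau>. \<tau> \<in> upper_regular W \<Longrightarrow> bd K \<tau> = {\<rho>. Fk K \<rho> \<tau>}" using bd_eq upK by blast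
      show ?thesis by (auto simp: e)
    qed
    moreover have "(\<forall>\<sigma>\<in>K. f \<sigma> \<subseteq> critical W \<inter> {\<nu>\<in>K. card \<nu> = card \<sigma>}) \<longleftrightarrow>
          (\<forall>x\<in>K. f x \<subseteq> {c\<in>critical W. int (card c) = int (card x)})"
      using crit_K by auto
    ultimately show ?thesis unfolding is_ref_map_def is_ref_def by simp
  qed
  then have "is_ref_map W K = is_ref K (Fk K) (\<lambda>x. int (card x)) (critical W) (upper_regular W)" by (rule ext)
  then show ?thesis unfolding ref_map_def by simp
qed

lemma coref_eq: "coref_map W K = (THE f. is_ref K (\<lambda>x y. Fk K y x) (\<lambda>x. - int (card x)) (critical W) (lower_regular W) f)"
proof -
  have "is_coref_map W K f \<longleftrightarrow> is_ref K (\<lambda>x y. Fk K y x) (\<lambda>x. - int (card x)) (critical W) (lower_regular W) f" for f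
  proof -
    have lowK: "lower_regular W \<subseteq> K" using ms.low_C[OF is_ms] .
    have "(\<forall>\<tau>\<in>lower_regular W. f \<tau> = {} \<and> lin f (cobd K \<tau>) = {}) \<longleftrightarrow>
          (\<forall>\<tau>\<in>lower_regular W. f \<tau> = {} \<and> lin f {\<rho>. Fk K \<tau> \<rho>} = {})"
    proof -
      have e: "\<And>\<tau>. \<tau> \<in> lower_regular W \<Longrightarrow> cobd K \<tau> = {\<rho>. Fk K \<tau> \<rho>}" using cobd_eq lowK by blast
      show ?thesis by (auto simp: e)
    qed
    moreover have "(\<forall>\<sigma>\<in>K. f \<sigma> \<subseteq> critical W \<inter> {\<nu>\<in>K. card \<nu> = card \<sigma>}) \<longleftrightarrow>
          (\<forall>x\<in>K. f x \<subseteq> {c\<in>critical W. - int (card c) = - int (card x)})"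
      using crit_K by auto
    ultimately show ?thesis unfolding is_coref_map_def is_ref_def by simp
  qed
  then have "is_coref_map W K = is_ref K (\<lambda>x y. Fk K y x) (\<lambda>x. - int (card x)) (critical W) (lower_regular W)" by (rule ext)
  then show ?thesis unfolding coref_map_def by simp
qed

end

theorem proposition18:
  fixes K :: "'v set set" and W :: "'v set set list" and p :: nat
  assumes "simplicial_complex K" and "morse_seq W K"
  shows "(\<forall>z\<in>cycles K p.
            chain_add (lin (ext_map W K) (lin (ref_map W K) z)) z \<in> boundaries K p) \<and>
         (\<forall>z\<in>cocycles K p.
            chain_add (lin (coext_map W K) (lin (coref_map W K) z)) z \<in> coboundaries K p)"
proof -
  interpret S: mseq K W using assms by (unfold_locales)
  interpret M: ms K "Fk K" "\<lambda>x. int (card x)" "critical W" "lower_regular W" "upper_regular W" S.Pk "\<lambda>x. int (S.tn x)"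
    by (rule S.is_ms)
  interpret D: ms K "\<lambda>x y. Fk K y x" "\<lambda>x. - int (card x)" "critical W" "upper_regular W" "lower_regular W"
    "\<lambda>x y. S.Pk y x" "\<lambda>x. - int (S.tn x)"
    by (rule M.dual)
  have ext_eq: "ext_map W K = (\<lambda>\<kappa>. {\<nu>\<in>K. \<kappa> \<in> (THE f. is_ref K (\<lambda>x y. Fk K y x) (\<lambda>x. - int (card x)) (critical W) (lower_regular W) f) \<nu>})"
    by (rule ext) (simp only: ext_map_def S.coref_eq)
  have coext_eq: "coext_map W K = (\<lambda>\<kappa>. {\<nu>\<in>K. \<kappa> \<in> (THE f. is_ref K (Fk K) (\<lambda>x. int (card x)) (critical W) (upper_regular W) f) \<nu>})"
    by (rule ext) (simp only: coext_map_def S.ref_eq)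
  have P1: "\<forall>z\<in>cycles K p. chain_add (lin (ext_map W K) (lin (ref_map W K) z)) z \<in> boundaries K p"
  proof
    fix z assume "z \<in> cycles K p"
    then have z: "z \<subseteq> simplices K p" "lin (bd K) z = {}" unfolding cycles_def by auto
    have zK: "z \<subseteq> K" using z(1) unfolding simplices_def by auto
    have zd: "\<forall>a\<in>z. int (card a) = int p + 1" using z(1) unfolding simplices_def by auto
    have "lin (bd K) z = lin (\<lambda>\<nu>. {\<rho>. Fk K \<rho> \<nu>}) z" by (rule lin_cong) (use zK S.bd_eq in blast)
    then have bz: "lin (\<lambda>\<nu>. {\<rho>. Fk K \<rho> \<nu>}) z = {}" using z(2) by simp
    obtain d where d: "d \<subseteq> {x\<in>K. int (card x) = int p + 1 + 1}"
      "chain_add (lin (\<lambda>\<kappa>. {\<nu>\<in>K. \<kappa> \<in> (THE f. is_ref K (\<lambda>x y. Fk K y x) (\<lambda>x. - int (card x)) (critical W) (lower_regular W) f) \<nu>})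
         (lin (THE f. is_ref K (Fk K) (\<lambda>x. int (card x)) (critical W) (upper_regular W) f) z)) z = lin (\<lambda>\<nu>. {\<rho>. Fk K \<rho> \<nu>}) d"
      using M.main[OF zK zd bz] by blast
    have ds: "d \<subseteq> simplices K (p + 1)" unfolding simplices_def using d(1) by auto
    have "lin (bd K) d = lin (\<lambda>\<nu>. {\<rho>. Fk K \<rho> \<nu>}) d" by (rule lin_cong) (use d(1) S.bd_eq in blast)
    then have "chain_add (lin (ext_map W K) (lin (ref_map W K) z)) z = lin (bd K) d"
      unfolding ext_eq S.ref_eq using d(2) by simp
    then show "chain_add (lin (ext_map W K) (lin (ref_map W K) z)) z \<in> boundaries K p"
      unfolding boundaries_def using ds by blast
  qed
  have P2: "\<forall>z\<in>cocycles K p. chain_add (lin (coext_map W K) (lin (coref_map W K) z)) z \<in> coboundaries K p"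
  proof
    fix z assume "z \<in> cocycles K p"
    then have z: "z \<subseteq> simplices K p" "lin (cobd K) z = {}" unfolding cocycles_def by auto
    have zK: "z \<subseteq> K" using z(1) unfolding simplices_def by auto
    have zd: "\<forall>a\<in>z. - int (card a) = - (int p + 1)" using z(1) unfolding simplices_def by auto
    have "lin (cobd K) z = lin (\<lambda>\<nu>. {\<rho>. Fk K \<nu> \<rho>}) z" by (rule lin_cong) (use zK S.cobd_eq in blast)
    then have bz: "lin (\<lambda>\<nu>. {\<rho>. Fk K \<nu> \<rho>}) z = {}" using z(2) by simp
    note m = D.main[OF zK zd bz]
    then obtain d where d: "d \<subseteq> {x\<in>K. - int (card x) = - (int p + 1) + 1}"
      "chain_add (lin (\<lambda>\<kappa>. {\<nu>\<in>K. \<kappa> \<in> (THE f. is_ref K (Fk K) (\<lambda>x. int (card x)) (critical W) (upper_regular W) f) \<nu>})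
         (lin (THE f. is_ref K (\<lambda>x y. Fk K y x) (\<lambda>x. - int (card x)) (critical W) (lower_regular W) f) z)) z = lin (\<lambda>\<nu>. {\<rho>. Fk K \<nu> \<rho>}) d"
      unfolding minus_minus by blast
    have ds: "d \<subseteq> {\<sigma>\<in>K. card \<sigma> = p}" using d(1) by auto
    have "lin (cobd K) d = lin (\<lambda>\<nu>. {\<rho>. Fk K \<nu> \<rho>}) d" by (rule lin_cong) (use d(1) S.cobd_eq in blast)
    then have "chain_add (lin (coext_map W K) (lin (coref_map W K) z)) z = lin (cobd K) d"
      unfolding coext_eq S.coref_eq using d(2) by simp
    then show "chain_add (lin (coext_map W K) (lin (coref_map W K) z)) z \<in> coboundaries K p"
      unfolding coboundaries_def using ds by blast
  qed
  show ?thesis using P1 P2 by blast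
qed

end
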